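(* Let $w>0$ and $\rho\in\mathcal R_w$ with $t_1\le t_2$ as in the definition of $\mathcal R_w$, $t_2>0$, and let $H_t$ be the stepping-out and shrinkage kernel. Then (1) for every $t\in[0,\|\rho\|_\infty]$, $H_t$ is positive semi-definite on $L_2(K(t),U_t)$, i.e. $\int (H_tf)f\,\mathrm dU_t\ge0$; and (2) for every $k\in\mathbb N$, \[ \beta_k=\Big(\frac1{t_2}\int_0^{t_2}\Big[1-\frac{w-\delta_t}{w}\cdot\frac{|K(t)|}{|K(t)|+\delta_t}\Big]^{2k}\mathrm dt\Big)^{1/2}. \]
   Context: Let $\rho:\mathbb R\to[0,\infty)$ with $0<\int\rho<\infty$, $K(t)=\{x:\rho(x)\ge t\}$, $|K(t)|$ its Lebesgue measure (assumed in $(0,\infty)$ for $t\in(0,\|\rho\|_\infty)$), $U_t$ uniform on $K(t)$. For $w>0$, $\rho\in\mathcal R_w$ means: there exist $t_1\le t_2$ in $[0,\|\rho\|_\infty]$ such that (a) for $t\in[0,t_1]\cup(t_2,\|\rho\|_\infty]$, $K(t)$ is an interval; (b) for $t\in(t_1,t_2]$ there are disjoint intervals $K_1(t),K_2(t)$ with $K(t)=K_1(t)\cup K_2(t)$ and $K_i(t+\varepsilon)\subseteq K_i(t)$ for $\varepsilon>0$; (c) $\delta_t<w$ for all $t$, where $\delta_t=\inf_{r\in K_1(t),s\in K_2(t)}|r-s|$ for $t\in(t_1,t_2]$ and $\delta_t=0$ otherwise. The stepping-out and shrinkage kernel on $K(t)$ is \[ H_t(x,A)=\gamma_tU_t(A)+(1-\gamma_t)\big[\mathbf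 1_{K_1(t)}(x)U_{t,1}(A)+\mathbf 1_{K_2(t)}(x)U_{t,2}(A)\big],\quad \gamma_t=\frac{w-\delta_t}{w}\cdot\frac{|K(t)|}{|K(t)|+\delta_t}, \] where $U_{t,i}$ is uniform on $K_i(t)$ (for $t\notin(t_1,t_2]$, $\gamma_t=1$ and $H_t=U_t$). With $L_{2,t}=L_2(K(t),U_t)$ and $U_t$ acting as $f\mapsto\int f\,\mathrm dU_t$, define $\beta_k=\sup_{x\in\mathbb R}\big(\int_0^{\rho(x)}\|H_t^k-U_t\|^2_{L_{2,t}\to L_{2,t}}\,\mathrm dt/\rho(x)\big)^{1/2}$. *)

theory Defs
  imports "HOL-Analysis.Analysis"
begin

definition lvl :: "(real \<Rightarrow> real) \<Rightarrow> real \<Rightarrow> real set" where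
  "lvl \<rho> t = {x. t \<le> \<rho> x}"

definition rho_max :: "(real \<Rightarrow> real) \<Rightarrow> real" where
  "rho_max \<rho> = Sup (range \<rho>)"

definition unif :: "real set \<Rightarrow> real measure" where
  "unif A = uniform_measure lborel A"

definition gap :: "real set \<Rightarrow> real set \<Rightarrow> real" where
  "gap A B = Inf {\<bar>r - s\<bar> | r s. r \<in> A \<and> s \<in> B}"

definition delta :: "real \<Rightarrow> real \<Rightarrow> (real \<Rightarrow> real set) \<Rightarrow> (real \<Rightarrow> real set) \<Rightarrow> real \<Rightarrow> real" where
  "delta t1 t2 K1 K2 t = (if t \<in> {t1<..t2} then gap (K1 t) (K2 t) else 0)"

text \<open>Membership of rho in R_w, witnessed by t1, t2, K1, K2.\<close>
definition in_Rw :: "real \<Rightarrow> (real \<Rightarrow> real) \<Rightarrow> real \<Rightarrow> real \<Rightarrow>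
    (real \<Rightarrow> real set) \<Rightarrow> (real \<Rightarrow> real set) \<Rightarrow> bool" where
  "in_Rw w \<rho> t1 t2 K1 K2 \<longleftrightarrow>
     0 \<le> t1 \<and> t1 \<le> t2 \<and> t2 \<le> rho_max \<rho> \<and>
     (\<forall>t \<in> {0..t1} \<union> {t2<..rho_max \<rho>}. is_interval (lvl \<rho> t)) \<and>
     (\<forall>t \<in> {t1<..t2}. is_interval (K1 t) \<and> is_interval (K2 t) \<and>
         K1 t \<noteq> {} \<and> K2 t \<noteq> {} \<and>
         K1 t \<inter> K2 t = {} \<and> lvl \<rho> t = K1 t \<union> K2 t) \<and>
     (\<forall>t \<in> {t1<..t2}. \<forall>\<epsilon>>0. t + \<epsilon> \<in> {t1<..t2} \<longrightarrow>
         K1 (t + \<epsilon>) \<subseteq> K1 t \<and> K2 (t + \<epsilon>) \<subseteq> K2 t) \<and>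
     (\<forall>t. delta t1 t2 K1 K2 t < w)"

definition gamma :: "real \<Rightarrow> (real \<Rightarrow> real) \<Rightarrow> real \<Rightarrow> real \<Rightarrow>
    (real \<Rightarrow> real set) \<Rightarrow> (real \<Rightarrow> real set) \<Rightarrow> real \<Rightarrow> real" where
  "gamma w \<rho> t1 t2 K1 K2 t =
     (if t \<in> {t1<..t2} then
        (w - delta t1 t2 K1 K2 t) / w *
        (measure lborel (lvl \<rho> t) / (measure lborel (lvl \<rho> t) + delta t1 t2 K1 K2 t))
      else 1)"

text \<open>The stepping-out and shrinkage kernel H_t acting on functions:
  (H_t f)(x) = integral of f w.r.t. the probability measure H_t(x, .).\<close>
definition Hop :: "real \<Rightarrow> (real \<Rightarrow> real) \<Rightarrow> real \<Rightarrow> real \<Rightarrow>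
    (real \<Rightarrow> real set) \<Rightarrow> (real \<Rightarrow> real set) \<Rightarrow> real \<Rightarrow> (real \<Rightarrow> real) \<Rightarrow> (real \<Rightarrow> real)" where
  "Hop w \<rho> t1 t2 K1 K2 t f x =
     (if t \<in> {t1<..t2} then
        gamma w \<rho> t1 t2 K1 K2 t * (\<integral>y. f y \<partial>unif (lvl \<rho> t)) +
        (1 - gamma w \<rho> t1 t2 K1 K2 t) *
          (indicator (K1 t) x * (\<integral>y. f y \<partial>unif (K1 t)) +
           indicator (K2 t) x * (\<integral>y. f y \<partial>unif (K2 t)))
      else (\<integral>y. f y \<partial>unif (lvl \<rho> t)))"

text \<open>Membership in L_2(K(t), U_t) (functions given on all of R; only values on K(t) matter).\<close>
definition L2 :: "real measure \<Rightarrow> (real \<Rightarrow> real) \<Rightarrow> bool" where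
  "L2 \<mu> f \<longleftrightarrow> f \<in> borel_measurable lborel \<and> integrable \<mu> (\<lambda>x. (f x)\<^sup>2)"

definition l2norm :: "real measure \<Rightarrow> (real \<Rightarrow> real) \<Rightarrow> real" where
  "l2norm \<mu> f = sqrt (\<integral>x. (f x)\<^sup>2 \<partial>\<mu>)"

text \<open>Operator norm of H_t^k - U_t on L_2(K(t),U_t), where U_t f = integral of f w.r.t. U_t.\<close>
definition opnorm_diff :: "real \<Rightarrow> (real \<Rightarrow> real) \<Rightarrow> real \<Rightarrow> real \<Rightarrow>
    (real \<Rightarrow> real set) \<Rightarrow> (real \<Rightarrow> real set) \<Rightarrow> nat \<Rightarrow> real \<Rightarrow> real" where
  "opnorm_diff w \<rho> t1 t2 K1 K2 k t =
     Sup {l2norm (unif (lvl \<rho> t))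
            (\<lambda>x. ((Hop w \<rho> t1 t2 K1 K2 t) ^^ k) f x - (\<integral>y. f y \<partial>unif (lvl \<rho> t))) | f.
          L2 (unif (lvl \<rho> t)) f \<and> l2norm (unif (lvl \<rho> t)) f \<le> 1}"

definition beta :: "real \<Rightarrow> (real \<Rightarrow> real) \<Rightarrow> real \<Rightarrow> real \<Rightarrow>
    (real \<Rightarrow> real set) \<Rightarrow> (real \<Rightarrow> real set) \<Rightarrow> nat \<Rightarrow> real" where
  "beta w \<rho> t1 t2 K1 K2 k =
     (SUP x. sqrt ((LINT t:{0..\<rho> x}|lborel. (opnorm_diff w \<rho> t1 t2 K1 K2 k t)\<^sup>2) / \<rho> x))"

end

theory Submission imports Defs begin

lemma meas_pos:
  assumes pos: "0 < emeasure lborel A" and fin: "emeasure lborel A < \<infinity>"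
  shows "0 < measure lborel A" "emeasure lborel A = ennreal (measure lborel A)"
proof -
  show e: "emeasure lborel A = ennreal (measure lborel A)"
    using fin by (intro emeasure_eq_ennreal_measure) auto
  show "0 < measure lborel A" using pos unfolding e by (simp only: ennreal_less_zero_iff)
qed

lemma unif_density:
  assumes pos: "0 < emeasure lborel A" and fin: "emeasure lborel A < \<infinity>"
  shows "unif A = density lborel (\<lambda>x. ennreal (indicator A x / measure lborel A))"
proof -
  note m = meas_pos[OF pos fin]
  have "\<And>x. indicator A x / emeasure lborel A = ennreal (indicator A x / measure lborel A)"
    unfolding m(2) by (subst divide_ennreal[symmetric]) (auto simp: m(1) ennreal_indicator)
  then show ?thesis unfolding unif_def uniform_measure_def by presburger
qed


lemma sets_of_pos: "0 < emeasure lborel A \<Longrightarrow> A \<in> sets lborel"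
  using emeasure_notin_sets by fastforce

lemma unif_integral:
  fixes g :: "real \<Rightarrow> real"
  assumes pos: "0 < emeasure lborel A" and fin: "emeasure lborel A < \<infinity>"
    and g: "g \<in> borel_measurable lborel"
  shows "(\<integral>x. g x \<partial>unif A) = (\<integral>x. indicator A x * g x \<partial>lborel) / measure lborel A"
proof -
  have A: "A \<in> sets lborel" using pos by (rule sets_of_pos)
  have gm: "(\<lambda>x. indicator A x / measure lborel A) \<in> borel_measurable lborel"
    using A by measurable
  have "(\<integral>x. g x \<partial>unif A) = (\<integral>x. indicator A x / measure lborel A * g x \<partial>lborel)"
    unfolding unif_density[OF pos fin]
    by (subst integral_density[OF g gm]) auto
  also have "\<dots> = (\<integral>x. indicator A x * g x / measure lborel A \<partial>lborel)"
    by (rule Bochner_Integration.integral_cong) auto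
  also have "\<dots> = (\<integral>x. indicator A x * g x \<partial>lborel) / measure lborel A"
    by (rule integral_divide_zero)
  finally show ?thesis .
qed

lemma unif_integrable:
  fixes g :: "real \<Rightarrow> real"
  assumes pos: "0 < emeasure lborel A" and fin: "emeasure lborel A < \<infinity>"
    and g: "g \<in> borel_measurable lborel"
  shows "integrable (unif A) g \<longleftrightarrow> integrable lborel (\<lambda>x. indicator A x * g x)"
proof -
  have A: "A \<in> sets lborel" using pos by (rule sets_of_pos)
  note m = meas_pos[OF pos fin]
  have gm: "(\<lambda>x. indicator A x / measure lborel A) \<in> borel_measurable lborel"
    using A by measurable
  have "integrable (unif A) g \<longleftrightarrow> integrable lborel (\<lambda>x. (indicator A x / measure lborel A) *\<^sub>R g x)"
    unfolding unif_density[OF pos fin]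
    by (subst integrable_density[OF g gm]) auto
  also have "\<dots> \<longleftrightarrow> integrable lborel (\<lambda>x. (1 / measure lborel A) * (indicator A x * g x))"
    by (intro arg_cong[where f="integrable lborel"] ext) auto
  also have "\<dots> \<longleftrightarrow> integrable lborel (\<lambda>x. indicator A x * g x)"
    using m(1) by (subst integrable_mult_left_iff) auto
  finally show ?thesis .
qed

lemma unif_const:
  fixes c :: real
  assumes pos: "0 < emeasure lborel A" and fin: "emeasure lborel A < \<infinity>"
  shows "(\<integral>x. c \<partial>unif A) = c"
proof -
  note m = meas_pos[OF pos fin]
  have A: "A \<in> sets lborel" using pos by (rule sets_of_pos)
  have "(\<integral>x. c \<partial>unif A) = (\<integral>x. indicator A x * c \<partial>lborel) / measure lborel A"
    by (rule unif_integral[OF pos fin]) simp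
  also have "(\<integral>x. indicator A x * c \<partial>lborel) = c * measure lborel A"
    using A fin by (simp add: mult.commute)
  finally show ?thesis using m(1) by simp
qed


lemma L2_integrable:
  fixes f :: "real \<Rightarrow> real"
  assumes pos: "0 < emeasure lborel A" and fin: "emeasure lborel A < \<infinity>"
    and L: "L2 (unif A) f"
  shows "integrable lborel (\<lambda>x. indicator A x * f x)"
    "integrable lborel (\<lambda>x. indicator A x * (f x)\<^sup>2)"
    "integrable (unif A) f"
proof -
  have fm: "f \<in> borel_measurable lborel" and f2: "integrable (unif A) (\<lambda>x. (f x)\<^sup>2)"
    using L unfolding L2_def by auto
  have A: "A \<in> sets lborel" using pos by (rule sets_of_pos)
  have "emeasure (unif A) (space (unif A)) = 1"
    unfolding unif_def using emeasure_uniform_measure[OF A, of UNIV] pos fin by simp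
  then interpret finite_measure "unif A" by (intro finite_measureI) simp
  have fmu: "f \<in> borel_measurable (unif A)"
    using fm unfolding unif_def uniform_measure_def by simp
  show fi: "integrable (unif A) f"
    by (rule square_integrable_imp_integrable[OF fmu f2])
  show "integrable lborel (\<lambda>x. indicator A x * f x)"
    using fi unif_integrable[OF pos fin fm] by simp
  show "integrable lborel (\<lambda>x. indicator A x * (f x)\<^sup>2)"
    using f2 unif_integrable[OF pos fin, of "\<lambda>x. (f x)\<^sup>2"] fm by simp
qed

lemma gap_nonneg: "A \<noteq> {} \<Longrightarrow> B \<noteq> {} \<Longrightarrow> 0 \<le> gap A B"
  unfolding gap_def by (rule cInf_greatest) auto

lemma gap_le:
  assumes "r \<in> A" "s \<in> B" shows "gap A B \<le> \<bar>r - s\<bar>"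
  unfolding gap_def by (rule cInf_lower) (use assms in \<open>auto intro!: bdd_belowI[of _ 0]\<close>)

lemma gap_mono:
  assumes "A' \<subseteq> A" "B' \<subseteq> B" "A' \<noteq> {}" "B' \<noteq> {}"
  shows "gap A B \<le> gap A' B'"
  unfolding gap_def
  by (rule cInf_superset_mono) (use assms in \<open>auto intro!: bdd_belowI[of _ 0]\<close>)

lemma gap_zero_if_interval:
  assumes "A \<noteq> {}" "B \<noteq> {}" "is_interval (A \<union> B)"
  shows "gap A B = 0"
proof (rule ccontr)
  assume ne: "gap A B \<noteq> 0"
  define d where "d = gap A B"
  have d: "0 < d" using gap_nonneg[OF assms(1,2)] ne unfolding d_def by simp
  obtain a b where a: "a \<in> A" and b: "b \<in> B" using assms by auto
  define U where "U = (\<Union>r\<in>A. ball r (d/2))"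
  define V where "V = (\<Union>s\<in>B. ball s (d/2))"
  define S where "S = {min a b .. max a b}"
  have "connected S" unfolding S_def by simp
  moreover have "open U" "open V" unfolding U_def V_def by auto
  moreover have "U \<inter> V \<inter> S = {}"
  proof (rule ccontr)
    assume "U \<inter> V \<inter> S \<noteq> {}"
    then obtain z r s where r: "r \<in> A" and s: "s \<in> B" and zr: "dist r z < d/2" and zs: "dist s z < d/2"
      unfolding U_def V_def by auto
    have "\<bar>r - s\<bar> < d" using zr zs abs_triangle_ineq4[of "r - z" "s - z"] unfolding dist_real_def by simp
    with gap_le[OF r s] show False unfolding d_def by simp
  qed
  moreover have "S \<subseteq> U \<union> V"
  proof
    fix z assume z: "z \<in> S"
    have "z \<in> A \<union> B"
      using assms(3) a b z unfolding is_interval_1 S_def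
      by (cases "a \<le> b") (auto simp: min_def max_def)
    then show "z \<in> U \<union> V" unfolding U_def V_def using d by force
  qed
  ultimately have "U \<inter> S = {} \<or> V \<inter> S = {}" by (rule connectedD)
  moreover have "a \<in> U \<inter> S" unfolding U_def S_def using a d by (auto intro!: bexI[of _ a])
  moreover have "b \<in> V \<inter> S" unfolding V_def S_def using b d by (auto intro!: bexI[of _ b])
  ultimately show False by auto
qed



lemma unif_finite:
  assumes pos: "0 < emeasure lborel A" and fin: "emeasure lborel A < \<infinity>"
  shows "finite_measure (unif A)"
proof -
  have A: "A \<in> sets lborel" using pos by (rule sets_of_pos)
  have "emeasure (unif A) (space (unif A)) = 1"
    unfolding unif_def using emeasure_uniform_measure[OF A, of UNIV] pos fin by simp
  then show ?thesis by (intro finite_measureI) simp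
qed

lemma unif_meas: "(f \<in> borel_measurable (unif A)) = (f \<in> borel_measurable lborel)"
  unfolding unif_def uniform_measure_def by simp

lemma var_bound:
  fixes f :: "real \<Rightarrow> real"
  assumes pos: "0 < emeasure lborel A" and fin: "emeasure lborel A < \<infinity>"
    and L: "L2 (unif A) f"
  shows "l2norm (unif A) (\<lambda>x. f x - (\<integral>y. f y \<partial>unif A)) \<le> l2norm (unif A) f"
proof -
  interpret finite_measure "unif A" by (rule unif_finite[OF pos fin])
  have fi: "integrable (unif A) f" by (rule L2_integrable(3)[OF pos fin L])
  have f2: "integrable (unif A) (\<lambda>x. (f x)\<^sup>2)" using L unfolding L2_def by auto
  define c where "c = (\<integral>y. f y \<partial>unif A)"
  have "(\<integral>x. (f x - c)\<^sup>2 \<partial>unif A) = (\<integral>x. (f x)\<^sup>2 - 2 * c * f x + c\<^sup>2 \<partial>unif A)"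
    by (rule Bochner_Integration.integral_cong) (auto simp: power2_diff)
  also have "\<dots> = (\<integral>x. (f x)\<^sup>2 \<partial>unif A) - 2 * c * c + c\<^sup>2 * measure (unif A) (space (unif A))"
    using fi f2 unfolding c_def by simp
  also have "measure (unif A) (space (unif A)) = 1"
    using unif_const[OF pos fin, of 1] by simp
  finally have "(\<integral>x. (f x - c)\<^sup>2 \<partial>unif A) \<le> (\<integral>x. (f x)\<^sup>2 \<partial>unif A)"
    by (simp add: power2_eq_square)
  then show ?thesis unfolding l2norm_def c_def by simp
qed

lemma witness:
  assumes AB: "A = B1 \<union> B2" "B1 \<inter> B2 = {}"
    and s1: "B1 \<in> sets lborel" and s2: "B2 \<in> sets lborel"
    and p1: "0 < emeasure lborel B1" "emeasure lborel B1 < \<infinity>"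
    and p2: "0 < emeasure lborel B2" "emeasure lborel B2 < \<infinity>"
  defines "m1 \<equiv> measure lborel B1" and "m2 \<equiv> measure lborel B2"
  defines "s \<equiv> 1 / sqrt (m1 * m2)"
  defines "f \<equiv> (\<lambda>x. indicator B1 x * (m2 * s) - indicator B2 x * (m1 * s))"
  shows "L2 (unif A) f" "l2norm (unif A) f = 1" "(\<integral>x. f x \<partial>unif A) = 0"
    "(\<integral>x. f x \<partial>unif B1) = m2 * s" "(\<integral>x. f x \<partial>unif B2) = - (m1 * s)"
proof -
  have m: "0 < m1" "0 < m2" unfolding m1_def m2_def using meas_pos(1)[OF p1] meas_pos(1)[OF p2] by auto
  have sA: "A \<in> sets lborel" using AB s1 s2 by auto
  have eA: "emeasure lborel A = emeasure lborel B1 + emeasure lborel B2"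
    unfolding AB(1) by (rule plus_emeasure[symmetric]) (use AB s1 s2 in auto)
  have pA: "0 < emeasure lborel A" "emeasure lborel A < \<infinity>" using eA p1 p2
    by (auto simp: less_top add_pos_nonneg)
  have mA: "measure lborel A = m1 + m2"
    unfolding AB(1) m1_def m2_def by (rule measure_Union) (use AB s1 s2 p1 p2 in auto)
  have ss: "s * s = 1 / (m1 * m2)" unfolding s_def using m
    by (simp add: real_sqrt_mult[symmetric] del: real_sqrt_mult)
  have fm: "f \<in> borel_measurable lborel" unfolding f_def using s1 s2 by measurable
  have i1: "integrable lborel (indicator B1 :: real \<Rightarrow> real)" using s1 p1 by auto
  have i2: "integrable lborel (indicator B2 :: real \<Rightarrow> real)" using s2 p2 by auto
  have e1: "(\<integral>x. indicator B1 x \<partial>lborel) = m1" unfolding m1_def by simp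
  have e2: "(\<integral>x. indicator B2 x \<partial>lborel) = m2" unfolding m2_def by simp
  have f2: "(\<lambda>x. indicator A x * (f x)\<^sup>2) = (\<lambda>x. indicator B1 x * (m2 * s)\<^sup>2 + indicator B2 x * (m1 * s)\<^sup>2)"
    unfolding f_def AB(1) using AB(2) by (intro ext) (auto split: split_indicator)
  have f2i: "integrable lborel (\<lambda>x. indicator A x * (f x)\<^sup>2)" unfolding f2 using i1 i2 by simp
  show "L2 (unif A) f" unfolding L2_def using fm f2i unif_integrable[OF pA, of "\<lambda>x. (f x)\<^sup>2"] by simp
  have "(\<integral>x. (f x)\<^sup>2 \<partial>unif A) = (\<integral>x. indicator A x * (f x)\<^sup>2 \<partial>lborel) / (m1 + m2)"
    using unif_integral[OF pA, of "\<lambda>x. (f x)\<^sup>2"] fm mA by simp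
  also have "(\<integral>x. indicator A x * (f x)\<^sup>2 \<partial>lborel) = m1 * (m2 * s)\<^sup>2 + m2 * (m1 * s)\<^sup>2"
    unfolding f2 using i1 i2 e1 e2 by (simp add: mult.commute)
  also have "m1 * (m2 * s)\<^sup>2 + m2 * (m1 * s)\<^sup>2 = m1 + m2"
    using ss m by (simp add: power2_eq_square field_simps)
  finally show "l2norm (unif A) f = 1" unfolding l2norm_def using m by simp
  have fA: "(\<lambda>x. indicator A x * f x) = (\<lambda>x. indicator B1 x * (m2 * s) - indicator B2 x * (m1 * s))"
    unfolding f_def AB(1) using AB(2) by (intro ext) (auto split: split_indicator)
  have "(\<integral>x. f x \<partial>unif A) = (\<integral>x. indicator A x * f x \<partial>lborel) / measure lborel A"
    by (rule unif_integral[OF pA fm])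
  also have "(\<integral>x. indicator A x * f x \<partial>lborel) = m1 * (m2 * s) - m2 * (m1 * s)"
    unfolding fA using i1 i2 e1 e2 by (simp add: mult.commute)
  finally show "(\<integral>x. f x \<partial>unif A) = 0" by simp
  have fB1: "(\<lambda>x. indicator B1 x * f x) = (\<lambda>x. indicator B1 x * (m2 * s))"
    unfolding f_def using AB(2) by (intro ext) (auto split: split_indicator)
  have "(\<integral>x. f x \<partial>unif B1) = (\<integral>x. indicator B1 x * f x \<partial>lborel) / m1"
    unfolding m1_def by (rule unif_integral[OF p1 fm])
  also have "\<dots> = m2 * s" unfolding fB1 using i1 e1 m by (simp add: mult.commute)
  finally show "(\<integral>x. f x \<partial>unif B1) = m2 * s" .
  have fB2: "(\<lambda>x. indicator B2 x * f x) = (\<lambda>x. - (indicator B2 x * (m1 * s)))"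
    unfolding f_def using AB(2) by (intro ext) (auto split: split_indicator)
  have "(\<integral>x. f x \<partial>unif B2) = (\<integral>x. indicator B2 x * f x \<partial>lborel) / m2"
    unfolding m2_def by (rule unif_integral[OF p2 fm])
  also have "\<dots> = - (m1 * s)" unfolding fB2 using i2 e2 m by (simp add: mult.commute)
  finally show "(\<integral>x. f x \<partial>unif B2) = - (m1 * s)" .
qed


lemma witness_ex:
  assumes AB: "A = B1 \<union> B2" "B1 \<inter> B2 = {}"
    and s1: "B1 \<in> sets lborel" and s2: "B2 \<in> sets lborel"
    and p1: "0 < emeasure lborel B1" "emeasure lborel B1 < \<infinity>"
    and p2: "0 < emeasure lborel B2" "emeasure lborel B2 < \<infinity>"
  shows "\<exists>f. L2 (unif A) f \<and> l2norm (unif A) f = 1 \<and> (\<integral>x. f x \<partial>unif A) = 0 \<and>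
    (\<integral>x. f x \<partial>unif B1) = measure lborel B2 * (1 / sqrt (measure lborel B1 * measure lborel B2)) \<and>
    (\<integral>x. f x \<partial>unif B2) = - (measure lborel B1 * (1 / sqrt (measure lborel B1 * measure lborel B2)))"
  by (rule exI, intro conjI, rule witness(1)[OF assms], rule witness(2)[OF assms],
      rule witness(3)[OF assms], rule witness(4)[OF assms], rule witness(5)[OF assms])

lemma sqrt_pow: "0 \<le> (x::real) \<Longrightarrow> sqrt (x ^ (2 * m)) = x ^ m"
  by (subst power_even_eq) simp

lemma interval_halves:
  fixes A :: "real set"
  assumes I: "is_interval A" and pos: "0 < emeasure lborel A" and fin: "emeasure lborel A < \<infinity>"
  shows "\<exists>B1 B2. A = B1 \<union> B2 \<and> B1 \<inter> B2 = {} \<and> B1 \<in> sets lborel \<and> B2 \<in> sets lborel \<and>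
    0 < emeasure lborel B1 \<and> emeasure lborel B1 < \<infinity> \<and> 0 < emeasure lborel B2 \<and> emeasure lborel B2 < \<infinity>"
proof -
  have sA: "A \<in> sets lborel" using pos by (rule sets_of_pos)
  have "\<exists>a\<in>A. \<exists>b\<in>A. a < b"
  proof (rule ccontr)
    assume na: "\<not> (\<exists>a\<in>A. \<exists>b\<in>A. a < b)"
    have "A \<noteq> {}" using pos by auto
    then obtain a where a: "a \<in> A" by auto
    have "A \<subseteq> {a}"
    proof
      fix y assume y: "y \<in> A"
      have "\<not> a < y" "\<not> y < a" using na a y by blast+
      then show "y \<in> {a}" by simp
    qed
    then have "emeasure lborel A \<le> emeasure lborel {a}" by (rule emeasure_mono) simp
    then show False using pos by simp
  qed
  then obtain a b where a: "a \<in> A" and b: "b \<in> A" and ab: "a < b" by auto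
  define c where "c = (a + b) / 2"
  define B1 where "B1 = A \<inter> {..<c}"
  define B2 where "B2 = A \<inter> {c..}"
  have s1: "B1 \<in> sets lborel" "B2 \<in> sets lborel" unfolding B1_def B2_def using sA by auto
  have inA: "y \<in> A" if "a \<le> y" "y \<le> b" for y
    using I a b that unfolding is_interval_1 by blast
  have cab: "a < c" "c < b" using ab unfolding c_def by auto
  have sub1: "{a..<c} \<subseteq> B1" unfolding B1_def using inA cab by auto
  have sub2: "{c..b} \<subseteq> B2" unfolding B2_def using inA cab by auto
  have "ennreal (c - a) \<le> emeasure lborel B1" using emeasure_mono[OF sub1 s1(1)] cab by simp
  moreover have "0 < ennreal (c - a)" using cab by simp
  ultimately have p1: "0 < emeasure lborel B1" by (meson order.strict_trans2)
  have "ennreal (b - c) \<le> emeasure lborel B2" using emeasure_mono[OF sub2 s1(2)] cab by simp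
  moreover have "0 < ennreal (b - c)" using cab by simp
  ultimately have p2: "0 < emeasure lborel B2" by (meson order.strict_trans2)
  have "emeasure lborel B1 \<le> emeasure lborel A" "emeasure lborel B2 \<le> emeasure lborel A"
    by (rule emeasure_mono[OF _ sA], simp add: B1_def, rule emeasure_mono[OF _ sA], simp add: B2_def)
  then have f1: "emeasure lborel B1 < \<infinity>" "emeasure lborel B2 < \<infinity>" using fin by auto
  show ?thesis
    by (rule exI[of _ B1], rule exI[of _ B2]) (use s1 p1 p2 f1 in \<open>auto simp: B1_def B2_def\<close>)
qed

lemma bdd_set_integrable:
  fixes G :: "real \<Rightarrow> real"
  assumes Gm: "G \<in> borel_measurable lborel" and G01: "\<And>t. 0 \<le> G t \<and> G t \<le> 1"
    and S: "S \<in> sets lborel" "emeasure lborel S < \<infinity>"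
  shows "integrable lborel (\<lambda>t. indicator S t * G t)"
proof (rule Bochner_Integration.integrable_bound[of lborel "indicator S :: real \<Rightarrow> real"])
  show "integrable lborel (indicator S :: real \<Rightarrow> real)" using S by (rule integrable_real_indicator)
  show "(\<lambda>t. indicator S t * G t) \<in> borel_measurable lborel" using Gm S by measurable
  show "AE x in lborel. norm (indicator S x * G x) \<le> norm (indicator S x :: real)"
    using G01 by (auto split: split_indicator)
qed

lemma avg_facts:
  fixes G :: "real \<Rightarrow> real"
  assumes Gm: "G \<in> borel_measurable lborel" and G01: "\<And>t. 0 \<le> G t \<and> G t \<le> 1"
    and Gz: "\<And>t. t \<notin> {t1<..t2} \<Longrightarrow> G t = 0"
    and Gmono: "\<And>t t'. t1 < t \<Longrightarrow> t \<le> t' \<Longrightarrow> t' \<le> t2 \<Longrightarrow> G t \<le> G t'"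
    and t: "0 \<le> t1" "t1 \<le> t2" "0 < t2"
  defines "I \<equiv> (\<lambda>s. \<integral>t. indicator {0..s} t * G t \<partial>lborel)"
  shows avg_ge: "\<And>s. t2 \<le> s \<Longrightarrow> I s = I t2"
    and avg_nonneg: "\<And>s. 0 \<le> I s"
    and avg_le: "I t2 \<le> t2"
    and avg_lip: "\<And>s. 0 \<le> s \<Longrightarrow> s \<le> t2 \<Longrightarrow> I t2 - (t2 - s) \<le> I s"
    and avg_max: "\<And>s. 0 < s \<Longrightarrow> I s / s \<le> I t2 / t2"
proof -
  have int: "integrable lborel (\<lambda>t. indicator S t * G t)" if "S \<in> sets lborel" "emeasure lborel S < \<infinity>" for S
    by (rule bdd_set_integrable[OF Gm G01 that])
  have iI: "integrable lborel (\<lambda>t. indicator {a..b} t * G t)" for a b by (rule int, simp, rule emeasure_bounded_finite, simp)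
  have iO: "integrable lborel (\<lambda>t. indicator {a<..b} t * G t)" for a b by (rule int, simp, rule emeasure_bounded_finite, simp)
  have indI: "integrable lborel (indicator {a..b} :: real \<Rightarrow> real)" for a b :: real
    by (rule integrable_real_indicator, simp, rule emeasure_bounded_finite, simp)
  have indO: "integrable lborel (indicator {a<..b} :: real \<Rightarrow> real)" for a b :: real
    by (rule integrable_real_indicator, simp, rule emeasure_bounded_finite, simp)
  show ge: "I s = I t2" if "t2 \<le> s" for s
    unfolding I_def using Gz t that
    by (intro Bochner_Integration.integral_cong refl) (auto split: split_indicator simp: not_le)
  show nn: "0 \<le> I s" for s unfolding I_def using G01 by (intro integral_nonneg_AE) (auto split: split_indicator)
  show le: "I t2 \<le> t2"
  proof -
    have "I t2 \<le> (\<integral>t. indicator {0..t2} t \<partial>lborel)"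
      unfolding I_def using G01 by (intro integral_mono iI indI) (auto split: split_indicator)
    then show ?thesis using t by simp
  qed
  have split: "I t2 = I s + (\<integral>t. indicator {s<..t2} t * G t \<partial>lborel)" if "0 \<le> s" "s \<le> t2" for s
  proof -
    have "(\<lambda>t. indicator {0..t2} t * G t) = (\<lambda>t. indicator {0..s} t * G t + indicator {s<..t2} t * G t)"
      using that by (intro ext) (auto split: split_indicator)
    then show ?thesis unfolding I_def using iI iO by simp
  qed
  show "I t2 - (t2 - s) \<le> I s" if "0 \<le> s" "s \<le> t2" for s
  proof -
    have "(\<integral>t. indicator {s<..t2} t * G t \<partial>lborel) \<le> (\<integral>t. indicator {s<..t2} t \<partial>lborel)"
      using G01 by (intro integral_mono iO indO) (auto split: split_indicator)
    then show ?thesis using split[OF that] that by simp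
  qed
  show "I s / s \<le> I t2 / t2" if s: "0 < s" for s
  proof (cases "t2 \<le> s")
    case True
    then show ?thesis using ge[OF True] nn[of t2] s t by (simp add: divide_left_mono)
  next
    case False
    then have st: "s < t2" by simp
    have a: "I s \<le> s * G s"
    proof -
      have "I s \<le> (\<integral>t. indicator {0..s} t * G s \<partial>lborel)"
        unfolding I_def
      proof (intro integral_mono iI)
        show "integrable lborel (\<lambda>t. indicator {0..s} t * G s)" using indI by simp
        fix x show "indicator {0..s} x * G x \<le> indicator {0..s} x * G s"
        proof (cases "x \<in> {0..s}")
          case True
          then show ?thesis
          proof (cases "t1 < x")
            case True
            then show ?thesis using Gmono[of x s] \<open>x \<in> {0..s}\<close> st by auto
          next
            case False
            then show ?thesis using Gz[of x] G01[of s] \<open>x \<in> {0..s}\<close> by auto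
          qed
        qed simp
      qed
      then show ?thesis using s by (simp add: mult.commute)
    qed
    have b: "(t2 - s) * G s \<le> (\<integral>t. indicator {s<..t2} t * G t \<partial>lborel)"
    proof -
      have "(\<integral>t. indicator {s<..t2} t * G s \<partial>lborel) \<le> (\<integral>t. indicator {s<..t2} t * G t \<partial>lborel)"
      proof (intro integral_mono iO)
        show "integrable lborel (\<lambda>t. indicator {s<..t2} t * G s)" using indO by simp
        fix x show "indicator {s<..t2} x * G s \<le> indicator {s<..t2} x * G x"
        proof (cases "x \<in> {s<..t2}")
          case True
          then show ?thesis
          proof (cases "t1 < s")
            case True
            then show ?thesis using Gmono[of s x] \<open>x \<in> {s<..t2}\<close> by auto
          next
            case False
            then have "G s = 0" using Gz[of s] by auto
            then show ?thesis using G01[of x] by (auto split: split_indicator)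
          qed
        qed simp
      qed
      then show ?thesis using st by (simp add: mult.commute)
    qed
    have sp: "I t2 = I s + (\<integral>t. indicator {s<..t2} t * G t \<partial>lborel)" using split s st by simp
    have "(t2 - s) * I s \<le> (t2 - s) * (s * G s)" using a st by (intro mult_left_mono) auto
    moreover have "s * ((t2 - s) * G s) \<le> s * (I t2 - I s)" using b sp s by (intro mult_left_mono) auto
    ultimately have "t2 * I s \<le> s * I t2" by (simp add: algebra_simps)
    then show ?thesis using s t by (simp add: divide_le_eq le_divide_eq mult.commute)
  qed
qed

locale LS =
  fixes w :: real and \<rho> :: "real \<Rightarrow> real" and t1 t2 :: real
    and K1 K2 :: "real \<Rightarrow> real set"
  assumes w_pos: "0 < w"
    and rho_nonneg: "\<And>x. 0 \<le> \<rho> x"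
    and rho_meas: "\<rho> \<in> borel_measurable lborel"
    and rho_int_pos: "0 < (\<integral>x. \<rho> x \<partial>lborel)"
    and rho_bdd: "bdd_above (range \<rho>)"
    and lvl_meas: "\<And>t. 0 < t \<Longrightarrow> t < rho_max \<rho> \<Longrightarrow>
                     0 < emeasure lborel (lvl \<rho> t) \<and> emeasure lborel (lvl \<rho> t) < \<infinity>"
    and Rw: "in_Rw w \<rho> t1 t2 K1 K2"
    and Ki_pos: "\<And>t. t \<in> {t1<..t2} \<Longrightarrow>
                   0 < emeasure lborel (K1 t) \<and> 0 < emeasure lborel (K2 t)"
    and t2_pos: "0 < t2"
begin

abbreviation "R \<equiv> rho_max \<rho>"
abbreviation "K \<equiv> lvl \<rho>"
abbreviation "mu t \<equiv> measure lborel (lvl \<rho> t)"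
abbreviation "dl \<equiv> delta t1 t2 K1 K2"
abbreviation "gm \<equiv> gamma w \<rho> t1 t2 K1 K2"
abbreviation "H \<equiv> Hop w \<rho> t1 t2 K1 K2"

lemma t_facts: "0 \<le> t1" "t1 \<le> t2" "t2 \<le> R"
  using Rw unfolding in_Rw_def by auto

lemma K_int_out: "t \<in> {0..t1} \<union> {t2<..R} \<Longrightarrow> is_interval (K t)"
  using Rw unfolding in_Rw_def by auto

lemma Ki: assumes "t \<in> {t1<..t2}"
  shows "is_interval (K1 t)" "is_interval (K2 t)" "K1 t \<noteq> {}" "K2 t \<noteq> {}"
    "K1 t \<inter> K2 t = {}" "K t = K1 t \<union> K2 t"
  using Rw assms unfolding in_Rw_def by auto

lemma Ki_mono: assumes "t \<in> {t1<..t2}" "t' \<in> {t1<..t2}" "t \<le> t'"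
  shows "K1 t' \<subseteq> K1 t" "K2 t' \<subseteq> K2 t"
proof -
  have "t = t' \<or> t < t'" using assms by auto
  then have "K1 t' \<subseteq> K1 t \<and> K2 t' \<subseteq> K2 t"
  proof
    assume "t < t'"
    then have "t + (t' - t) \<in> {t1<..t2}" "t' - t > 0" using assms by auto
    moreover have "\<forall>\<epsilon>>0. t + \<epsilon> \<in> {t1<..t2} \<longrightarrow> K1 (t + \<epsilon>) \<subseteq> K1 t \<and> K2 (t + \<epsilon>) \<subseteq> K2 t"
      using Rw assms(1) unfolding in_Rw_def by blast
    ultimately have "K1 (t + (t' - t)) \<subseteq> K1 t \<and> K2 (t + (t' - t)) \<subseteq> K2 t" by blast
    then show ?thesis by simp
  qed auto
  then show "K1 t' \<subseteq> K1 t" "K2 t' \<subseteq> K2 t" by auto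
qed

lemma delta_lt_w: "dl t < w"
  using Rw unfolding in_Rw_def by auto

lemma delta_nonneg: "0 \<le> dl t"
  unfolding delta_def using Ki(3,4) by (auto intro: gap_nonneg)

lemma delta_mono: assumes "t \<in> {t1<..t2}" "t' \<in> {t1<..t2}" "t \<le> t'"
  shows "dl t \<le> dl t'"
  unfolding delta_def using assms Ki_mono[OF assms] Ki(3,4)[OF assms(2)]
  by (auto intro: gap_mono)

lemma K_sets: "K t \<in> sets lborel"
proof -
  have "{x \<in> space lborel. t \<le> \<rho> x} \<in> sets lborel" using rho_meas by measurable
  then show ?thesis unfolding lvl_def by simp
qed

lemma Ki_sets: "t \<in> {t1<..t2} \<Longrightarrow> K1 t \<in> sets lborel" "t \<in> {t1<..t2} \<Longrightarrow> K2 t \<in> sets lborel"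
  using Ki(1,2) real_interval_borel_measurable by auto

lemma rho_le_R: "\<rho> x \<le> R"
  unfolding rho_max_def using rho_bdd by (rule cSup_upper[rotated]) simp

lemma K_mono: "t \<le> t' \<Longrightarrow> K t' \<subseteq> K t"
  unfolding lvl_def by auto

lemma K_fin: assumes "0 < t" "t \<le> R" shows "emeasure lborel (K t) < \<infinity>"
proof -
  have "0 < t/2" "t/2 < R" using assms by auto
  then have "emeasure lborel (K (t/2)) < \<infinity>" using lvl_meas by blast
  moreover have "emeasure lborel (K t) \<le> emeasure lborel (K (t/2))"
    by (rule emeasure_mono[OF K_mono K_sets]) (use assms in auto)
  ultimately show ?thesis by auto
qed

lemma in_range: "t \<in> {t1<..t2} \<Longrightarrow> 0 < t \<and> t \<le> R"
  using t_facts by auto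

lemma K_pos: assumes "t \<in> {t1<..t2}" shows "0 < emeasure lborel (K t)"
proof -
  have sub: "K1 t \<subseteq> K t" using Ki(6)[OF assms] by auto
  have "emeasure lborel (K1 t) \<le> emeasure lborel (K t)"
    by (rule emeasure_mono[OF sub K_sets])
  then show ?thesis using Ki_pos[OF assms] by auto
qed

lemma Ki_fin: assumes "t \<in> {t1<..t2}"
  shows "emeasure lborel (K1 t) < \<infinity>" "emeasure lborel (K2 t) < \<infinity>"
proof -
  have sub: "K1 t \<subseteq> K t" "K2 t \<subseteq> K t" using Ki(6)[OF assms] by auto
  have "emeasure lborel (K1 t) \<le> emeasure lborel (K t)" "emeasure lborel (K2 t) \<le> emeasure lborel (K t)"
    by (rule emeasure_mono[OF sub(1) K_sets], rule emeasure_mono[OF sub(2) K_sets])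
  then show "emeasure lborel (K1 t) < \<infinity>" "emeasure lborel (K2 t) < \<infinity>"
    using K_fin in_range[OF assms] by (auto intro: le_less_trans)
qed

lemma mu_split: assumes "t \<in> {t1<..t2}"
  shows "mu t = measure lborel (K1 t) + measure lborel (K2 t)"
  unfolding Ki(6)[OF assms]
  by (rule measure_Union) (use Ki(5)[OF assms] Ki_sets[OF assms] Ki_fin[OF assms] in auto)

lemma gamma_eq: "t \<in> {t1<..t2} \<Longrightarrow> gm t = (w - dl t) / w * (mu t / (mu t + dl t))"
  unfolding gamma_def by simp

lemma gamma_bounds: assumes "t \<in> {t1<..t2}" shows "0 \<le> gm t" "gm t \<le> 1"
proof -
  have m: "0 < mu t" using meas_pos(1)[OF K_pos[OF assms] K_fin] in_range[OF assms] by auto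
  have a: "0 \<le> (w - dl t) / w" "(w - dl t) / w \<le> 1" using less_imp_le[OF delta_lt_w[of t]] delta_nonneg[of t] w_pos
    by (auto simp: field_simps)
  have b: "0 \<le> mu t / (mu t + dl t)" "mu t / (mu t + dl t) \<le> 1" using m delta_nonneg[of t]
    by (auto simp: field_simps)
  show "0 \<le> gm t" unfolding gamma_eq[OF assms] by (rule mult_nonneg_nonneg[OF a(1) b(1)])
  show "gm t \<le> 1" using a b gamma_eq[OF assms] mult_mono[OF a(2) b(2)] by simp
qed


lemma Hop_in: "t \<in> {t1<..t2} \<Longrightarrow> H t f x = gm t * (\<integral>y. f y \<partial>unif (K t)) +
   (1 - gm t) * (indicator (K1 t) x * (\<integral>y. f y \<partial>unif (K1 t)) +
                  indicator (K2 t) x * (\<integral>y. f y \<partial>unif (K2 t)))"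
  unfolding Hop_def by simp

lemma Hop_out: "t \<notin> {t1<..t2} \<Longrightarrow> H t f = (\<lambda>x. \<integral>y. f y \<partial>unif (K t))"
  unfolding Hop_def by auto

lemma Hop_meas: "H t g \<in> borel_measurable lborel"
proof (cases "t \<in> {t1<..t2}")
  case True
  note [measurable] = Ki_sets[OF True]
  show ?thesis unfolding Hop_in[OF True, abs_def] by measurable
qed (simp add: Hop_out)

lemma ind_mult_sub: "B \<subseteq> A \<Longrightarrow> indicator A x * (indicator B x * y) = (indicator B x * (y::real))"
  by (auto split: split_indicator)

lemma ind_mult_sub2: "B \<subseteq> A \<Longrightarrow> indicator B x * (indicator A x * y) = (indicator B x * (y::real))"
  by (auto split: split_indicator)

lemma psd_in:
  assumes t: "t \<in> {t1<..t2}" and L: "L2 (unif (K t)) f"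
  shows "0 \<le> (\<integral>x. H t f x * f x \<partial>unif (K t))"
proof -
  define g where "g = gm t"
  define A where "A = K t"
  define A1 where "A1 = K1 t"
  define A2 where "A2 = K2 t"
  have pA: "0 < emeasure lborel A" "emeasure lborel A < \<infinity>"
    unfolding A_def using K_pos[OF t] K_fin in_range[OF t] by auto
  have pA1: "0 < emeasure lborel A1" "emeasure lborel A1 < \<infinity>"
    unfolding A1_def using Ki_pos[OF t] Ki_fin[OF t] by auto
  have pA2: "0 < emeasure lborel A2" "emeasure lborel A2 < \<infinity>"
    unfolding A2_def using Ki_pos[OF t] Ki_fin[OF t] by auto
  have sub: "A1 \<subseteq> A" "A2 \<subseteq> A" unfolding A_def A1_def A2_def using Ki(6)[OF t] by auto
  have fm: "f \<in> borel_measurable lborel" using L unfolding L2_def by auto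
  have sA1: "A1 \<in> sets lborel" "A2 \<in> sets lborel" using Ki_sets[OF t] unfolding A1_def A2_def by auto
  have i0: "integrable lborel (\<lambda>x. indicator A x * f x)"
    using L2_integrable(1)[OF pA] L unfolding A_def by simp
  have i1: "integrable lborel (\<lambda>x. indicator A1 x * f x)"
    using integrable_mult_indicator[OF sA1(1) i0] sub by (simp add: ind_mult_sub2)
  have i2: "integrable lborel (\<lambda>x. indicator A2 x * f x)"
    using integrable_mult_indicator[OF sA1(2) i0] sub by (simp add: ind_mult_sub2)
  define S where "S = (\<integral>x. indicator A x * f x \<partial>lborel)"
  define S1 where "S1 = (\<integral>x. indicator A1 x * f x \<partial>lborel)"
  define S2 where "S2 = (\<integral>x. indicator A2 x * f x \<partial>lborel)"
  define m where "m = measure lborel A"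
  define m1 where "m1 = measure lborel A1"
  define m2 where "m2 = measure lborel A2"
  have m: "0 < m" "0 < m1" "0 < m2" unfolding m_def m1_def m2_def
    using meas_pos(1)[OF pA] meas_pos(1)[OF pA1] meas_pos(1)[OF pA2] by auto
  have c: "(\<integral>y. f y \<partial>unif A) = S / m" unfolding S_def m_def by (rule unif_integral[OF pA fm])
  have c1: "(\<integral>y. f y \<partial>unif A1) = S1 / m1" unfolding S1_def m1_def by (rule unif_integral[OF pA1 fm])
  have c2: "(\<integral>y. f y \<partial>unif A2) = S2 / m2" unfolding S2_def m2_def by (rule unif_integral[OF pA2 fm])
  have Hf: "H t f x = g * (S / m) + (1 - g) * (indicator A1 x * (S1 / m1) + indicator A2 x * (S2 / m2))" for x
    using Hop_in[OF t, of f x] c c1 c2 unfolding g_def A_def A1_def A2_def by simp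
  have Hm: "(\<lambda>x. H t f x * f x) \<in> borel_measurable lborel" using Hop_meas fm by measurable
  have "(\<integral>x. H t f x * f x \<partial>unif A) = (\<integral>x. indicator A x * (H t f x * f x) \<partial>lborel) / m"
    unfolding m_def by (rule unif_integral[OF pA Hm])
  also have "(\<lambda>x. indicator A x * (H t f x * f x)) = (\<lambda>x. g * (S / m) * (indicator A x * f x) +
      (1 - g) * ((S1 / m1) * (indicator A1 x * f x) + (S2 / m2) * (indicator A2 x * f x)))"
  proof (rule ext)
    fix x show "indicator A x * (H t f x * f x) = g * (S / m) * (indicator A x * f x) +
      (1 - g) * ((S1 / m1) * (indicator A1 x * f x) + (S2 / m2) * (indicator A2 x * f x))"
      using sub by (cases "x \<in> A1"; cases "x \<in> A2"; cases "x \<in> A") (auto simp: Hf algebra_simps)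
  qed
  also have "(\<integral>x. g * (S / m) * (indicator A x * f x) +
      (1 - g) * ((S1 / m1) * (indicator A1 x * f x) + (S2 / m2) * (indicator A2 x * f x)) \<partial>lborel)
      = g * (S / m) * S + (1 - g) * ((S1 / m1) * S1 + (S2 / m2) * S2)"
    using i0 i1 i2 unfolding S_def S1_def S2_def by simp
  finally have eq: "(\<integral>x. H t f x * f x \<partial>unif A) = (g * (S / m) * S + (1 - g) * ((S1 / m1) * S1 + (S2 / m2) * S2)) / m" .
  have g: "0 \<le> g" "g \<le> 1" unfolding g_def using gamma_bounds[OF t] by auto
  have "0 \<le> g * (S / m) * S" using g m by (simp add: mult.assoc mult_nonneg_nonneg)
  moreover have "0 \<le> (S1 / m1) * S1 + (S2 / m2) * S2"
  proof -
    have "(S1 / m1) * S1 = S1\<^sup>2 / m1" "(S2 / m2) * S2 = S2\<^sup>2 / m2" by (simp_all add: power2_eq_square)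
    then show ?thesis using m by simp
  qed
  ultimately have "0 \<le> g * (S / m) * S + (1 - g) * ((S1 / m1) * S1 + (S2 / m2) * S2)"
    using g by (simp add: mult_nonneg_nonneg)
  then show ?thesis using eq m unfolding A_def by simp
qed

lemma psd_out:
  assumes t: "t \<notin> {t1<..t2}"
  shows "0 \<le> (\<integral>x. H t f x * f x \<partial>unif (K t))"
  unfolding Hop_out[OF t] by simp

lemma part1: "0 \<le> (\<integral>x. H t f x * f x \<partial>unif (K t))" if "L2 (unif (K t)) f"
  using psd_in[OF _ that] psd_out by blast


definition phi :: "real set \<Rightarrow> real set \<Rightarrow> real \<Rightarrow> real \<Rightarrow> real \<Rightarrow> real \<Rightarrow> real" where
  "phi B1 B2 c e1 e2 = (\<lambda>x. c + indicator B1 x * e1 + indicator B2 x * e2)"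

context
  fixes t assumes t: "t \<in> {t1<..t2}"
begin

lemma pK: "0 < emeasure lborel (K t)" "emeasure lborel (K t) < \<infinity>"
  using K_pos[OF t] K_fin in_range[OF t] by auto
lemma pK1: "0 < emeasure lborel (K1 t)" "emeasure lborel (K1 t) < \<infinity>"
  using Ki_pos[OF t] Ki_fin[OF t] by auto
lemma pK2: "0 < emeasure lborel (K2 t)" "emeasure lborel (K2 t) < \<infinity>"
  using Ki_pos[OF t] Ki_fin[OF t] by auto
lemma mpos: "0 < mu t" "0 < measure lborel (K1 t)" "0 < measure lborel (K2 t)"
  using meas_pos(1)[OF pK] meas_pos(1)[OF pK1] meas_pos(1)[OF pK2] by auto
lemma subK: "K1 t \<subseteq> K t" "K2 t \<subseteq> K t" using Ki(6)[OF t] by auto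
lemma sKi[measurable]: "K1 t \<in> sets lborel" "K2 t \<in> sets lborel" using Ki_sets[OF t] by auto
lemma iK1: "integrable lborel (indicator (K1 t) :: real \<Rightarrow> real)" by (rule integrable_real_indicator[OF sKi(1) pK1(2)])
lemma iK2: "integrable lborel (indicator (K2 t) :: real \<Rightarrow> real)" by (rule integrable_real_indicator[OF sKi(2) pK2(2)])
lemma iK: "integrable lborel (indicator (K t) :: real \<Rightarrow> real)" by (rule integrable_real_indicator[OF K_sets pK(2)])

lemma H_cong:
  assumes "g \<in> borel_measurable lborel" "g' \<in> borel_measurable lborel" "\<And>x. x \<in> K t \<Longrightarrow> g x = g' x"
  shows "H t g = H t g'"
proof -
  have e: "(\<lambda>x. indicator A x * g x) = (\<lambda>x. indicator A x * g' x)" if "A \<subseteq> K t" for A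
    using that assms(3) by (intro ext) (auto split: split_indicator)
  have "(\<integral>y. g y \<partial>unif (K t)) = (\<integral>y. g' y \<partial>unif (K t))"
    using unif_integral[OF pK assms(1)] unif_integral[OF pK assms(2)] e[of "K t"] by simp
  moreover have "(\<integral>y. g y \<partial>unif (K1 t)) = (\<integral>y. g' y \<partial>unif (K1 t))"
    using unif_integral[OF pK1 assms(1)] unif_integral[OF pK1 assms(2)] e[OF subK(1)] by simp
  moreover have "(\<integral>y. g y \<partial>unif (K2 t)) = (\<integral>y. g' y \<partial>unif (K2 t))"
    using unif_integral[OF pK2 assms(1)] unif_integral[OF pK2 assms(2)] e[OF subK(2)] by simp
  ultimately show ?thesis by (intro ext) (simp add: Hop_in[OF t])
qed

lemma phi_meas: "phi (K1 t) (K2 t) c e1 e2 \<in> borel_measurable lborel"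
  unfolding phi_def by measurable

lemma phi_int:
  "(\<integral>x. phi (K1 t) (K2 t) c e1 e2 x \<partial>unif (K t)) =
     c + (measure lborel (K1 t) * e1 + measure lborel (K2 t) * e2) / mu t"
  "(\<integral>x. phi (K1 t) (K2 t) c e1 e2 x \<partial>unif (K1 t)) = c + e1"
  "(\<integral>x. phi (K1 t) (K2 t) c e1 e2 x \<partial>unif (K2 t)) = c + e2"
proof -
  have d: "K1 t \<inter> K2 t = {}" using Ki(5)[OF t] .
  have a: "(\<lambda>x. indicator (K t) x * phi (K1 t) (K2 t) c e1 e2 x) =
      (\<lambda>x. c * indicator (K t) x + e1 * indicator (K1 t) x + e2 * indicator (K2 t) x)"
    unfolding phi_def using subK by (intro ext) (auto split: split_indicator)
  have "(\<integral>x. c * indicator (K t) x + e1 * indicator (K1 t) x + e2 * indicator (K2 t) x \<partial>lborel)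
      = c * mu t + e1 * measure lborel (K1 t) + e2 * measure lborel (K2 t)"
    using iK iK1 iK2 by simp
  then show "(\<integral>x. phi (K1 t) (K2 t) c e1 e2 x \<partial>unif (K t)) =
     c + (measure lborel (K1 t) * e1 + measure lborel (K2 t) * e2) / mu t"
    using unif_integral[OF pK phi_meas] a mpos by (simp add: field_simps)
  have b: "(\<lambda>x. indicator (K1 t) x * phi (K1 t) (K2 t) c e1 e2 x) = (\<lambda>x. (c + e1) * indicator (K1 t) x)"
    unfolding phi_def using d by (intro ext) (auto split: split_indicator)
  show "(\<integral>x. phi (K1 t) (K2 t) c e1 e2 x \<partial>unif (K1 t)) = c + e1"
    using unif_integral[OF pK1 phi_meas] b mpos iK1 by simp
  have b2: "(\<lambda>x. indicator (K2 t) x * phi (K1 t) (K2 t) c e1 e2 x) = (\<lambda>x. (c + e2) * indicator (K2 t) x)"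
    unfolding phi_def using d by (intro ext) (auto split: split_indicator)
  show "(\<integral>x. phi (K1 t) (K2 t) c e1 e2 x \<partial>unif (K2 t)) = c + e2"
    using unif_integral[OF pK2 phi_meas] b2 mpos iK2 by simp
qed

lemma inK: "x \<in> K t \<Longrightarrow> indicator (K1 t) x + indicator (K2 t) x = (1::real)"
  using Ki(5,6)[OF t] by (auto split: split_indicator)

lemma H_phi:
  assumes z: "measure lborel (K1 t) * e1 + measure lborel (K2 t) * e2 = 0" and x: "x \<in> K t"
  shows "H t (phi (K1 t) (K2 t) c e1 e2) x = phi (K1 t) (K2 t) c ((1 - gm t) * e1) ((1 - gm t) * e2) x"
proof -
  have "H t (phi (K1 t) (K2 t) c e1 e2) x = gm t * c + (1 - gm t) * (indicator (K1 t) x * (c + e1) + indicator (K2 t) x * (c + e2))"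
    unfolding Hop_in[OF t] phi_int z by simp
  also have "\<dots> = gm t * c + (1 - gm t) * (c * (indicator (K1 t) x + indicator (K2 t) x) + indicator (K1 t) x * e1 + indicator (K2 t) x * e2)"
    by (simp add: algebra_simps)
  also have "\<dots> = phi (K1 t) (K2 t) c ((1 - gm t) * e1) ((1 - gm t) * e2) x"
    unfolding inK[OF x] phi_def by (simp add: algebra_simps)
  finally show ?thesis .
qed

abbreviation "cK f \<equiv> (\<integral>y. f y \<partial>unif (K t))"
abbreviation "cK1 f \<equiv> (\<integral>y. f y \<partial>unif (K1 t))"
abbreviation "cK2 f \<equiv> (\<integral>y. f y \<partial>unif (K2 t))"

lemma L2_ints:
  assumes L: "L2 (unif (K t)) f"
  shows "integrable lborel (\<lambda>x. indicator (K t) x * f x)"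
    "integrable lborel (\<lambda>x. indicator (K1 t) x * f x)"
    "integrable lborel (\<lambda>x. indicator (K2 t) x * f x)"
    "integrable lborel (\<lambda>x. indicator (K t) x * (f x)\<^sup>2)"
    "integrable lborel (\<lambda>x. indicator (K1 t) x * (f x)\<^sup>2)"
    "integrable lborel (\<lambda>x. indicator (K2 t) x * (f x)\<^sup>2)"
proof -
  show i0: "integrable lborel (\<lambda>x. indicator (K t) x * f x)" using L2_integrable(1)[OF pK L] .
  show i02: "integrable lborel (\<lambda>x. indicator (K t) x * (f x)\<^sup>2)" using L2_integrable(2)[OF pK L] .
  show "integrable lborel (\<lambda>x. indicator (K1 t) x * f x)"
    using integrable_mult_indicator[OF sKi(1) i0] subK by (simp add: ind_mult_sub2)
  show "integrable lborel (\<lambda>x. indicator (K2 t) x * f x)"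
    using integrable_mult_indicator[OF sKi(2) i0] subK by (simp add: ind_mult_sub2)
  show "integrable lborel (\<lambda>x. indicator (K1 t) x * (f x)\<^sup>2)"
    using integrable_mult_indicator[OF sKi(1) i02] subK by (simp add: ind_mult_sub2)
  show "integrable lborel (\<lambda>x. indicator (K2 t) x * (f x)\<^sup>2)"
    using integrable_mult_indicator[OF sKi(2) i02] subK by (simp add: ind_mult_sub2)
qed

lemma ind_split: "indicator (K t) x * (y::real) = indicator (K1 t) x * y + indicator (K2 t) x * y"
  using Ki(5,6)[OF t] by (auto split: split_indicator)

lemma mc:
  assumes L: "L2 (unif (K t)) f"
  shows "measure lborel (K1 t) * cK1 f + measure lborel (K2 t) * cK2 f = mu t * cK f"
proof -
  have fm: "f \<in> borel_measurable lborel" using L unfolding L2_def by auto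
  note I = L2_ints[OF L]
  have "(\<integral>x. indicator (K t) x * f x \<partial>lborel) = (\<integral>x. indicator (K1 t) x * f x \<partial>lborel) + (\<integral>x. indicator (K2 t) x * f x \<partial>lborel)"
    unfolding ind_split using I by simp
  then show ?thesis using unif_integral[OF pK fm] unif_integral[OF pK1 fm] unif_integral[OF pK2 fm] mpos
    by simp
qed

lemma iter:
  assumes L: "L2 (unif (K t)) f" and x: "x \<in> K t"
  shows "(H t ^^ Suc n) f x = phi (K1 t) (K2 t) (cK f) ((1 - gm t) ^ Suc n * (cK1 f - cK f))
            ((1 - gm t) ^ Suc n * (cK2 f - cK f)) x"
  using x
proof (induction n arbitrary: x)
  case 0
  have "(H t ^^ Suc 0) f x = gm t * cK f + (1 - gm t) * (indicator (K1 t) x * cK1 f + indicator (K2 t) x * cK2 f)"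
    using Hop_in[OF t] by simp
  also have "\<dots> = gm t * cK f + (1 - gm t) * (cK f * (indicator (K1 t) x + indicator (K2 t) x) +
       indicator (K1 t) x * (cK1 f - cK f) + indicator (K2 t) x * (cK2 f - cK f))"
    by (simp add: algebra_simps)
  also have "\<dots> = phi (K1 t) (K2 t) (cK f) ((1 - gm t) ^ Suc 0 * (cK1 f - cK f))
            ((1 - gm t) ^ Suc 0 * (cK2 f - cK f)) x"
    unfolding inK[OF 0(1)] phi_def by (simp add: algebra_simps)
  finally show ?case .
next
  case (Suc n)
  define e1 where "e1 = (1 - gm t) ^ Suc n * (cK1 f - cK f)"
  define e2 where "e2 = (1 - gm t) ^ Suc n * (cK2 f - cK f)"
  have "(H t ^^ Suc n) f = H t ((H t ^^ n) f)" by simp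
  then have m: "(H t ^^ Suc n) f \<in> borel_measurable lborel" using Hop_meas by simp
  have eq: "H t ((H t ^^ Suc n) f) = H t (phi (K1 t) (K2 t) (cK f) e1 e2)"
    by (rule H_cong[OF m phi_meas]) (use Suc.IH in \<open>simp add: e1_def e2_def\<close>)
  have z: "measure lborel (K1 t) * e1 + measure lborel (K2 t) * e2 = 0"
  proof -
    have "measure lborel (K1 t) * e1 + measure lborel (K2 t) * e2 =
      (1 - gm t) ^ Suc n * ((measure lborel (K1 t) * cK1 f + measure lborel (K2 t) * cK2 f) -
         (measure lborel (K1 t) + measure lborel (K2 t)) * cK f)"
      unfolding e1_def e2_def by (simp add: algebra_simps)
    also have "\<dots> = 0" unfolding mc[OF L] mu_split[OF t, symmetric] by simp
    finally show ?thesis .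
  qed
  have "(H t ^^ Suc (Suc n)) f x = H t ((H t ^^ Suc n) f) x" by simp
  also have "\<dots> = phi (K1 t) (K2 t) (cK f) ((1 - gm t) * e1) ((1 - gm t) * e2) x"
    unfolding eq by (rule H_phi[OF z Suc.prems])
  finally show ?case unfolding e1_def e2_def by (simp add: mult.assoc)
qed


abbreviation "EE f \<equiv> (measure lborel (K1 t) * (cK1 f - cK f)\<^sup>2 + measure lborel (K2 t) * (cK2 f - cK f)\<^sup>2) / mu t"

lemma Hk_meas: "(H t ^^ Suc n) f \<in> borel_measurable lborel"
proof -
  have "(H t ^^ Suc n) f = H t ((H t ^^ n) f)" by simp
  then show ?thesis using Hop_meas by simp
qed

lemma norm_iter:
  assumes L: "L2 (unif (K t)) f"
  shows "(\<integral>x. ((H t ^^ Suc n) f x - cK f)\<^sup>2 \<partial>unif (K t)) = (1 - gm t) ^ (2 * Suc n) * EE f"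
proof -
  define a where "a = (1 - gm t) ^ (2 * Suc n)"
  have m: "(\<lambda>x. ((H t ^^ Suc n) f x - cK f)\<^sup>2) \<in> borel_measurable lborel"
    using Hk_meas by measurable
  have pw: "(\<lambda>x. indicator (K t) x * ((H t ^^ Suc n) f x - cK f)\<^sup>2) =
     (\<lambda>x. a * (cK1 f - cK f)\<^sup>2 * indicator (K1 t) x + a * (cK2 f - cK f)\<^sup>2 * indicator (K2 t) x)"
  proof (rule ext)
    fix x
    show "indicator (K t) x * ((H t ^^ Suc n) f x - cK f)\<^sup>2 =
       a * (cK1 f - cK f)\<^sup>2 * indicator (K1 t) x + a * (cK2 f - cK f)\<^sup>2 * indicator (K2 t) x"
    proof (cases "x \<in> K t")
      case True
      have aq: "a = ((1 - gm t) ^ Suc n)\<^sup>2" unfolding a_def by (rule power_even_eq)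
      have "x \<in> K1 t \<and> x \<notin> K2 t \<or> x \<in> K2 t \<and> x \<notin> K1 t" using Ki(5,6)[OF t] True by auto
      moreover have v: "(H t ^^ Suc n) f x = cK f + indicator (K1 t) x * ((1 - gm t) ^ Suc n * (cK1 f - cK f))
          + indicator (K2 t) x * ((1 - gm t) ^ Suc n * (cK2 f - cK f))"
        using iter[OF L True] unfolding phi_def by simp
      ultimately show ?thesis unfolding v
        by (elim disjE) (simp_all add: aq power_mult_distrib True)
    next
      case False
      then show ?thesis using subK by (auto split: split_indicator)
    qed
  qed
  have "(\<integral>x. ((H t ^^ Suc n) f x - cK f)\<^sup>2 \<partial>unif (K t)) =
      (\<integral>x. indicator (K t) x * ((H t ^^ Suc n) f x - cK f)\<^sup>2 \<partial>lborel) / mu t"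
    by (rule unif_integral[OF pK m])
  also have "\<dots> = (a * (cK1 f - cK f)\<^sup>2 * measure lborel (K1 t) + a * (cK2 f - cK f)\<^sup>2 * measure lborel (K2 t)) / mu t"
    unfolding pw using iK1 iK2 by simp
  also have "\<dots> = a * EE f" by (simp add: add_divide_distrib algebra_simps)
  finally show ?thesis unfolding a_def .
qed

lemma E_bound:
  assumes L: "L2 (unif (K t)) f"
  shows "EE f \<le> (\<integral>x. (f x)\<^sup>2 \<partial>unif (K t))"
proof -
  have fm: "f \<in> borel_measurable lborel" using L unfolding L2_def by auto
  note I = L2_ints[OF L]
  define m1 where "m1 = measure lborel (K1 t)"
  define m2 where "m2 = measure lborel (K2 t)"
  define c where "c = cK f"
  define c1 where "c1 = cK1 f"
  define c2 where "c2 = cK2 f"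
  define Q1 where "Q1 = (\<integral>x. indicator (K1 t) x * (f x)\<^sup>2 \<partial>lborel)"
  define Q2 where "Q2 = (\<integral>x. indicator (K2 t) x * (f x)\<^sup>2 \<partial>lborel)"
  have S1: "(\<integral>x. indicator (K1 t) x * f x \<partial>lborel) = m1 * c1"
    using unif_integral[OF pK1 fm] mpos unfolding m1_def c1_def by simp
  have S2: "(\<integral>x. indicator (K2 t) x * f x \<partial>lborel) = m2 * c2"
    using unif_integral[OF pK2 fm] mpos unfolding m2_def c2_def by simp
  have Q: "(\<integral>x. indicator (K t) x * (f x)\<^sup>2 \<partial>lborel) = Q1 + Q2"
    unfolding ind_split Q1_def Q2_def using I by simp
  have q1: "m1 * c1\<^sup>2 \<le> Q1"
  proof -
    have "0 \<le> (\<integral>x. indicator (K1 t) x * (f x - c1)\<^sup>2 \<partial>lborel)"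
      by (rule integral_nonneg_AE) auto
    also have "(\<lambda>x. indicator (K1 t) x * (f x - c1)\<^sup>2) = (\<lambda>x. indicator (K1 t) x * (f x)\<^sup>2 - 2 * c1 * (indicator (K1 t) x * f x) + c1\<^sup>2 * indicator (K1 t) x)"
      by (intro ext) (auto split: split_indicator simp: power2_diff)
    also have "(\<integral>x. indicator (K1 t) x * (f x)\<^sup>2 - 2 * c1 * (indicator (K1 t) x * f x) + c1\<^sup>2 * indicator (K1 t) x \<partial>lborel)
       = Q1 - 2 * c1 * (m1 * c1) + c1\<^sup>2 * m1"
      using I iK1 S1 unfolding Q1_def m1_def by simp
    finally show ?thesis by (simp add: power2_eq_square algebra_simps)
  qed
  have q2: "m2 * c2\<^sup>2 \<le> Q2"
  proof -
    have "0 \<le> (\<integral>x. indicator (K2 t) x * (f x - c2)\<^sup>2 \<partial>lborel)"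
      by (rule integral_nonneg_AE) auto
    also have "(\<lambda>x. indicator (K2 t) x * (f x - c2)\<^sup>2) = (\<lambda>x. indicator (K2 t) x * (f x)\<^sup>2 - 2 * c2 * (indicator (K2 t) x * f x) + c2\<^sup>2 * indicator (K2 t) x)"
      by (intro ext) (auto split: split_indicator simp: power2_diff)
    also have "(\<integral>x. indicator (K2 t) x * (f x)\<^sup>2 - 2 * c2 * (indicator (K2 t) x * f x) + c2\<^sup>2 * indicator (K2 t) x \<partial>lborel)
       = Q2 - 2 * c2 * (m2 * c2) + c2\<^sup>2 * m2"
      using I iK2 S2 unfolding Q2_def m2_def by simp
    finally show ?thesis by (simp add: power2_eq_square algebra_simps)
  qed
  have mcs: "m1 * c1 + m2 * c2 = mu t * c" using mc[OF L] unfolding m1_def m2_def c_def c1_def c2_def .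
  have ms: "mu t = m1 + m2" using mu_split[OF t] unfolding m1_def m2_def .
  have "m1 * (c1 - c)\<^sup>2 + m2 * (c2 - c)\<^sup>2 = m1 * c1\<^sup>2 + m2 * c2\<^sup>2 - 2 * c * (m1 * c1 + m2 * c2) + (m1 + m2) * c\<^sup>2"
    by (simp add: power2_diff algebra_simps)
  also have "\<dots> = m1 * c1\<^sup>2 + m2 * c2\<^sup>2 - mu t * c\<^sup>2" unfolding mcs ms[symmetric] by (simp add: power2_eq_square)
  also have "\<dots> \<le> Q1 + Q2"
  proof -
    have "0 \<le> mu t * c\<^sup>2" using mpos(1) by simp
    then show ?thesis using q1 q2 by linarith
  qed
  finally have "m1 * (c1 - c)\<^sup>2 + m2 * (c2 - c)\<^sup>2 \<le> Q1 + Q2" .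
  then have "(m1 * (c1 - c)\<^sup>2 + m2 * (c2 - c)\<^sup>2) / mu t \<le> (Q1 + Q2) / mu t"
    using mpos(1) by (simp add: divide_right_mono)
  also have "(Q1 + Q2) / mu t = (\<integral>x. (f x)\<^sup>2 \<partial>unif (K t))"
    using unif_integral[OF pK, of "\<lambda>x. (f x)\<^sup>2"] fm Q by simp
  finally show ?thesis unfolding m1_def m2_def c_def c1_def c2_def .
qed


lemma opn_in: "opnorm_diff w \<rho> t1 t2 K1 K2 k t = (1 - gm t) ^ k"
proof -
  define S where "S = {l2norm (unif (K t)) (\<lambda>x. (H t ^^ k) f x - cK f) | f.
          L2 (unif (K t)) f \<and> l2norm (unif (K t)) f \<le> 1}"
  have g: "0 \<le> 1 - gm t" "1 - gm t \<le> 1" using gamma_bounds[OF t] by auto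
  have ub: "z \<le> (1 - gm t) ^ k" if "z \<in> S" for z
  proof -
    obtain f where z: "z = l2norm (unif (K t)) (\<lambda>x. (H t ^^ k) f x - cK f)"
      and L: "L2 (unif (K t)) f" and n1: "l2norm (unif (K t)) f \<le> 1"
      using \<open>z \<in> S\<close> unfolding S_def by auto
    have Q: "(\<integral>x. (f x)\<^sup>2 \<partial>unif (K t)) \<le> 1" using n1 unfolding l2norm_def by simp
    show ?thesis
    proof (cases k)
      case 0
      then show ?thesis using var_bound[OF pK L] n1 z by simp
    next
      case (Suc n)
      have "z = sqrt ((1 - gm t) ^ (2 * Suc n) * EE f)"
        unfolding z l2norm_def Suc norm_iter[OF L] ..
      also have "\<dots> \<le> sqrt ((1 - gm t) ^ (2 * Suc n) * 1)"
        using E_bound[OF L] Q g by (intro real_sqrt_le_mono mult_left_mono) auto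
      also have "\<dots> = (1 - gm t) ^ Suc n"
        using sqrt_pow[OF g(1), of "Suc n"] by simp
      finally show ?thesis unfolding Suc .
    qed
  qed
  obtain f0 where L0: "L2 (unif (K t)) f0" and n0: "l2norm (unif (K t)) f0 = 1" and c0: "cK f0 = 0"
    and c1: "cK1 f0 = measure lborel (K2 t) * (1 / sqrt (measure lborel (K1 t) * measure lborel (K2 t)))"
    and c2: "cK2 f0 = - (measure lborel (K1 t) * (1 / sqrt (measure lborel (K1 t) * measure lborel (K2 t))))"
    using witness_ex[OF Ki(6,5)[OF t] sKi pK1 pK2] by blast
  have wit: "(1 - gm t) ^ k \<in> S"
  proof -
    have "l2norm (unif (K t)) (\<lambda>x. (H t ^^ k) f0 x - cK f0) = (1 - gm t) ^ k"
    proof (cases k)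
      case 0
      then show ?thesis using n0 c0 by simp
    next
      case (Suc n)
      define m1 where "m1 = measure lborel (K1 t)"
      define m2 where "m2 = measure lborel (K2 t)"
      have mm: "0 < m1" "0 < m2" using mpos unfolding m1_def m2_def by auto
      have ss: "(1 / sqrt (m1 * m2))\<^sup>2 = 1 / (m1 * m2)" using mm
        by (simp add: power_divide)
      have "EE f0 = (m1 * (m2 * (1 / sqrt (m1 * m2)))\<^sup>2 + m2 * (m1 * (1 / sqrt (m1 * m2)))\<^sup>2) / (m1 + m2)"
        unfolding c0 c1 c2 mu_split[OF t] m1_def m2_def by simp
      also have "\<dots> = 1" unfolding power_mult_distrib ss using mm
        by (simp add: field_simps power2_eq_square)
      finally have E1: "EE f0 = 1" .
      have "l2norm (unif (K t)) (\<lambda>x. (H t ^^ k) f0 x - cK f0) = sqrt ((1 - gm t) ^ (2 * Suc n) * EE f0)"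
        unfolding l2norm_def Suc norm_iter[OF L0] ..
      also have "\<dots> = (1 - gm t) ^ Suc n" unfolding E1 using sqrt_pow[OF g(1), of "Suc n"] by simp
      finally show ?thesis unfolding Suc .
    qed
    then show ?thesis unfolding S_def using L0 n0 by force
  qed
  have "Sup S = (1 - gm t) ^ k" by (rule cSup_eq_maximum[OF wit]) (use ub in blast)
  then show ?thesis unfolding S_def opnorm_diff_def .
qed

end


lemma opn_out:
  assumes t: "t \<notin> {t1<..t2}" and t0: "0 < t" and tR: "t < R"
  shows "opnorm_diff w \<rho> t1 t2 K1 K2 k t = 0 ^ k"
proof -
  have pK: "0 < emeasure lborel (K t)" "emeasure lborel (K t) < \<infinity>" using lvl_meas t0 tR by auto
  have Iv: "is_interval (K t)" using K_int_out t t0 tR by auto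
  define S where "S = {l2norm (unif (K t)) (\<lambda>x. (H t ^^ k) f x - (\<integral>y. f y \<partial>unif (K t))) | f.
          L2 (unif (K t)) f \<and> l2norm (unif (K t)) f \<le> 1}"
  have "Sup S = 0 ^ k"
  proof (cases k)
    case 0
    have ub: "z \<le> 1" if "z \<in> S" for z
    proof -
      obtain f where z: "z = l2norm (unif (K t)) (\<lambda>x. f x - (\<integral>y. f y \<partial>unif (K t)))"
        and L: "L2 (unif (K t)) f" and n1: "l2norm (unif (K t)) f \<le> 1"
        using \<open>z \<in> S\<close> unfolding S_def 0 by auto
      show ?thesis using var_bound[OF pK L] n1 z by simp
    qed
    obtain B1 B2 where BB: "K t = B1 \<union> B2" "B1 \<inter> B2 = {}" "B1 \<in> sets lborel" "B2 \<in> sets lborel"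
      "0 < emeasure lborel B1" "emeasure lborel B1 < \<infinity>" "0 < emeasure lborel B2" "emeasure lborel B2 < \<infinity>"
      using interval_halves[OF Iv pK] by blast
    obtain f0 where L0: "L2 (unif (K t)) f0" and n0: "l2norm (unif (K t)) f0 = 1"
      and c0: "(\<integral>y. f0 y \<partial>unif (K t)) = 0"
      using witness_ex[OF BB] by blast
    have wit: "1 \<in> S" unfolding S_def 0 using L0 n0 c0 by force
    show ?thesis using cSup_eq_maximum[OF wit] ub 0 by auto
  next
    case (Suc n)
    have Hc: "(H t ^^ Suc m) f = (\<lambda>x. \<integral>y. f y \<partial>unif (K t))" for m f
    proof (induction m)
      case 0 then show ?case using Hop_out[OF t] by simp
    next
      case (Suc m)
      have "(H t ^^ Suc (Suc m)) f = H t ((H t ^^ Suc m) f)" by simp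
      also have "\<dots> = (\<lambda>x. \<integral>y. f y \<partial>unif (K t))"
        unfolding Suc Hop_out[OF t] using unif_const[OF pK, of 1] by simp
      finally show ?case .
    qed
    have ub: "z \<le> 0" if "z \<in> S" for z
      using that unfolding S_def Suc Hc l2norm_def by auto
    have L00: "L2 (unif (K t)) (\<lambda>x. 0)" unfolding L2_def by simp
    have wit: "0 \<in> S" unfolding S_def Suc Hc l2norm_def using L00 by force
    show ?thesis using cSup_eq_maximum[OF wit] ub Suc by auto
  qed
  then show ?thesis unfolding S_def opnorm_diff_def .
qed


lemma mu_pos_out: "0 < t \<Longrightarrow> t < R \<Longrightarrow> 0 < mu t"
  using lvl_meas meas_pos(1) by blast

lemma gamma_mono: assumes "t1 < t" "t \<le> t'" "t' \<le> t2" shows "gm t' \<le> gm t"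
proof -
  have tt: "t \<in> {t1<..t2}" "t' \<in> {t1<..t2}" using assms by auto
  define d where "d = dl t"
  define d' where "d' = dl t'"
  define m where "m = mu t"
  define m' where "m' = mu t'"
  have dd: "0 \<le> d" "d \<le> d'" "d' < w" unfolding d_def d'_def
    using delta_nonneg delta_mono[OF tt assms(2)] delta_lt_w by auto
  have mpos': "0 < m'" unfolding m'_def using mpos(1)[OF tt(2)] .
  have mm: "m' \<le> m" unfolding m_def m'_def
    by (rule measure_mono_fmeasurable[OF K_mono[OF assms(2)] K_sets])
       (use pK[OF tt(1)] K_sets in \<open>auto simp: fmeasurable_def\<close>)
  have a: "(w - d') / w \<le> (w - d) / w" using dd w_pos by (simp add: divide_right_mono)
  have a0: "0 \<le> (w - d) / w" using dd w_pos by simp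
  have b0: "0 \<le> m' / (m' + d')" using mpos' dd by simp
  have "m' * d \<le> m * d'" using mm dd mpos' by (intro mult_mono) auto
  then have "m' * (m + d) \<le> m * (m' + d')" by (simp add: algebra_simps)
  then have b: "m' / (m' + d') \<le> m / (m + d)" using mpos' dd mm
    by (simp add: divide_le_eq le_divide_eq mult.commute)
  show ?thesis unfolding gamma_eq[OF tt(1)] gamma_eq[OF tt(2)] d_def[symmetric] d'_def[symmetric]
      m_def[symmetric] m'_def[symmetric]
    by (rule mult_mono[OF a b a0 b0])
qed

definition GG :: "nat \<Rightarrow> real \<Rightarrow> real" where
  "GG k t = (if t \<in> {t1<..t2} then (1 - gm t) ^ (2 * k) else 0)"

lemma GG01: "0 \<le> GG k t \<and> GG k t \<le> 1"
  unfolding GG_def using gamma_bounds by (auto intro: power_le_one)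

lemma GGz: "t \<notin> {t1<..t2} \<Longrightarrow> GG k t = 0" unfolding GG_def by auto

lemma GGmono: "t1 < t \<Longrightarrow> t \<le> t' \<Longrightarrow> t' \<le> t2 \<Longrightarrow> GG k t \<le> GG k t'"
  unfolding GG_def using gamma_mono[of t t'] gamma_bounds[of t] gamma_bounds[of t']
  by (auto intro!: power_mono)

lemma GGmeas: "GG k \<in> borel_measurable lborel"
proof -
  have "GG k \<in> borel_measurable borel"
  proof (rule borel_measurable_piecewise_mono[of "{{t1<..t2}, - {t1<..t2}}"])
    fix c assume "c \<in> {{t1<..t2}, - {t1<..t2}}"
    then show "mono_on c (GG k)"
      by (auto simp: mono_on_def GGz intro: GGmono)
  qed auto
  then show ?thesis by simp
qed

lemma opn_sq: assumes "0 < t" "t < R" "0 < k"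
  shows "(opnorm_diff w \<rho> t1 t2 K1 K2 k t)\<^sup>2 = GG k t"
proof (cases "t \<in> {t1<..t2}")
  case True
  then show ?thesis unfolding opn_in[OF True] GG_def by (simp add: power_mult[symmetric] mult.commute)
next
  case False
  then show ?thesis unfolding opn_out[OF False assms(1,2)] GG_def using assms(3) by auto
qed

lemma opn0: assumes "0 < t" "t < R" shows "opnorm_diff w \<rho> t1 t2 K1 K2 0 t = 1"
  using opn_in opn_out assms by (cases "t \<in> {t1<..t2}") auto

lemma Fst_eq: assumes "0 < t" "t < R" "0 < k"
  shows "(1 - (w - dl t) / w * (mu t / (mu t + dl t))) ^ (2 * k) = GG k t"
proof (cases "t \<in> {t1<..t2}")
  case True
  then show ?thesis unfolding GG_def gamma_eq[OF True] by simp
next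
  case False
  then have "dl t = 0" unfolding delta_def by auto
  then show ?thesis unfolding GG_def using False mu_pos_out[OF assms(1,2)] w_pos assms(3) by auto
qed


lemma int_opn_pos: assumes "0 \<le> s" "s \<le> R" "0 < k"
  shows "(LINT t:{0..s}|lborel. (opnorm_diff w \<rho> t1 t2 K1 K2 k t)\<^sup>2) = (\<integral>t. indicator {0..s} t * GG k t \<partial>lborel)"
  unfolding set_lebesgue_integral_def
proof (rule integral_discrete_difference[where X="{0, R}"])
  fix x assume "x \<notin> {0, R}"
  then show "indicator {0..s} x *\<^sub>R (opnorm_diff w \<rho> t1 t2 K1 K2 k x)\<^sup>2 = indicator {0..s} x * GG k x"
    using opn_sq[of x k] assms by (cases "x \<in> {0..s}") auto
qed auto

lemma int_opn0: assumes "0 \<le> s" "s \<le> R"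
  shows "(LINT t:{0..s}|lborel. (opnorm_diff w \<rho> t1 t2 K1 K2 0 t)\<^sup>2) = s"
proof -
  have "(LINT t:{0..s}|lborel. (opnorm_diff w \<rho> t1 t2 K1 K2 0 t)\<^sup>2) = (\<integral>t. indicator {0..s} t \<partial>lborel)"
    unfolding set_lebesgue_integral_def
  proof (rule integral_discrete_difference[where X="{0, R}"])
    fix x assume "x \<notin> {0, R}"
    then show "indicator {0..s} x *\<^sub>R (opnorm_diff w \<rho> t1 t2 K1 K2 0 x)\<^sup>2 = indicator {0..s} x"
      using opn0[of x] assms by (cases "x \<in> {0..s}") auto
  qed auto
  then show ?thesis using assms by simp
qed

lemma rhs_pos: assumes "0 < k"
  shows "(LINT t:{0..t2}|lborel. (1 - (w - dl t) / w * (mu t / (mu t + dl t))) ^ (2 * k))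
     = (\<integral>t. indicator {0..t2} t * GG k t \<partial>lborel)"
  unfolding set_lebesgue_integral_def
proof (rule integral_discrete_difference[where X="{0, R}"])
  fix x assume "x \<notin> {0, R}"
  then show "indicator {0..t2} x *\<^sub>R (1 - (w - dl x) / w * (mu x / (mu x + dl x))) ^ (2 * k) = indicator {0..t2} x * GG k x"
    using Fst_eq[of x k] assms t_facts by (cases "x \<in> {0..t2}") auto
qed auto

lemma rhs0:
  shows "(LINT t:{0..t2}|lborel. (1 - (w - dl t) / w * (mu t / (mu t + dl t))) ^ (2 * 0)) = t2"
  using t2_pos by (simp add: set_lebesgue_integral_def)

lemma exists_pos: "\<exists>x. 0 < \<rho> x"
proof (rule ccontr)
  assume "\<not> ?thesis"
  then have "\<And>x. \<rho> x = 0" using rho_nonneg by (metis less_eq_real_def)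
  then show False using rho_int_pos by simp
qed

lemma beta0: "beta w \<rho> t1 t2 K1 K2 0 =
   sqrt (1 / t2 * (LINT t:{0..t2}|lborel. (1 - (w - dl t) / w * (mu t / (mu t + dl t))) ^ (2 * 0)))"
proof -
  have trm: "sqrt ((LINT t:{0..\<rho> x}|lborel. (opnorm_diff w \<rho> t1 t2 K1 K2 0 t)\<^sup>2) / \<rho> x)
      = (if \<rho> x = 0 then 0 else 1)" for x
    using int_opn0[OF rho_nonneg rho_le_R, of x] by simp
  obtain x0 where x0: "0 < \<rho> x0" using exists_pos by blast
  have "beta w \<rho> t1 t2 K1 K2 0 = 1"
    unfolding beta_def trm
    by (rule cSup_eq_maximum) (use x0 in \<open>auto intro!: image_eqI[of _ _ x0]\<close>)
  then show ?thesis unfolding rhs0 using t2_pos by simp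
qed


abbreviation "II k s \<equiv> (\<integral>t. indicator {0..s} t * GG k t \<partial>lborel)"

lemma avgk: "\<And>s. t2 \<le> s \<Longrightarrow> II k s = II k t2" "\<And>s. 0 \<le> II k s" "II k t2 \<le> t2"
   "\<And>s. 0 \<le> s \<Longrightarrow> s \<le> t2 \<Longrightarrow> II k t2 - (t2 - s) \<le> II k s"
   "\<And>s. 0 < s \<Longrightarrow> II k s / s \<le> II k t2 / t2"
  using avg_facts[OF GGmeas[of k] GG01[of k] GGz[where k=k] GGmono[where k=k] t_facts(1,2) t2_pos] by blast+

lemma close_values:
  assumes k: "0 < k" and J: "0 < II k t2" and d: "0 < d"
  shows "\<exists>x. \<bar>\<rho> x - t2\<bar> < d"
proof (rule ccontr)
  assume na: "\<not> (\<exists>x. \<bar>\<rho> x - t2\<bar> < d)"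
  have G0: "GG k t2 = 0"
  proof (cases "t2 < R")
    case True
    define t' where "t' = min (t2 + d/2) R"
    have t': "t2 < t'" "t' \<le> R" unfolding t'_def using True d by auto
    have KK: "K t2 = K t'"
    proof
      show "K t' \<subseteq> K t2" by (rule K_mono) (use t' in auto)
      show "K t2 \<subseteq> K t'"
      proof
        fix x assume "x \<in> K t2"
        then have "t2 \<le> \<rho> x" unfolding lvl_def by simp
        moreover have "\<not> \<bar>\<rho> x - t2\<bar> < d" using na by blast
        ultimately have "t2 + d \<le> \<rho> x" by simp
        then show "x \<in> K t'" unfolding lvl_def t'_def using d by simp
      qed
    qed
    have Iv: "is_interval (K t2)" unfolding KK using K_int_out[of t'] t' by auto
    show ?thesis
    proof (cases "t2 \<in> {t1<..t2}")
      case True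
      have "gap (K1 t2) (K2 t2) = 0"
        using gap_zero_if_interval[OF Ki(3,4)[OF True]] Iv Ki(6)[OF True] by simp
      then have "dl t2 = 0" unfolding delta_def using True by simp
      then have "gm t2 = 1" unfolding gamma_eq[OF True] using mpos(1)[OF True] w_pos by simp
      then show ?thesis unfolding GG_def using k by simp
    next
      case False
      then show ?thesis by (rule GGz)
    qed
  next
    case False
    then have tR: "t2 = R" using t_facts by simp
    have "t2 - d < Sup (range \<rho>)" using tR d unfolding rho_max_def by simp
    then obtain y where "y \<in> range \<rho>" "t2 - d < y" using less_cSupD[of "range \<rho>"] by blast
    then obtain x where "t2 - d < \<rho> x" by auto
    moreover have "\<rho> x \<le> t2" using rho_le_R tR by simp
    ultimately have "\<bar>\<rho> x - t2\<bar> < d" by simp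
    then show ?thesis using na by blast
  qed
  have "GG k t = 0" for t
  proof (cases "t \<in> {t1<..t2}")
    case True
    then have "GG k t \<le> GG k t2" by (intro GGmono) auto
    then show ?thesis using G0 GG01[of k t] by simp
  qed (rule GGz)
  then have "II k t2 = 0" by simp
  then show False using J by simp
qed

lemma approx_sup:
  assumes k: "0 < k" and J: "0 < II k t2" and e: "0 < e"
  shows "\<exists>x. 0 < \<rho> x \<and> II k t2 / t2 - e \<le> II k (\<rho> x) / \<rho> x"
proof -
  define d where "d = min (e * t2) (t2 / 2)"
  have d: "0 < d" "d \<le> e * t2" "d \<le> t2 / 2" unfolding d_def using e t2_pos by auto
  obtain x where x: "\<bar>\<rho> x - t2\<bar> < d" using close_values[OF k J d(1)] by blast
  define s where "s = \<rho> x"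
  define Jv where "Jv = II k t2"
  have s0: "0 < s" using x d t2_pos unfolding s_def by simp
  have Jle: "Jv \<le> t2" unfolding Jv_def by (rule avgk(3))
  have "Jv / t2 - e \<le> II k s / s"
  proof (cases "t2 \<le> s")
    case True
    have Is: "II k s = Jv" unfolding Jv_def by (rule avgk(1)[OF True])
    have "Jv * (s - t2) \<le> t2 * (s - t2)" using Jle True by (intro mult_right_mono) auto
    also have "\<dots> \<le> t2 * d" using x True t2_pos unfolding s_def by (intro mult_left_mono) auto
    also have "\<dots> \<le> t2 * (e * t2)" using d t2_pos by (intro mult_left_mono) auto
    also have "\<dots> \<le> e * t2 * s" using True e t2_pos by (simp add: mult_left_mono)
    finally have "Jv * (s - t2) \<le> e * t2 * s" .
    then have "Jv / t2 - Jv / s \<le> e" using s0 t2_pos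
      by (simp add: field_simps)
    then show ?thesis unfolding Is by simp
  next
    case False
    have "Jv - (t2 - s) \<le> II k s" unfolding Jv_def by (rule avgk(4)) (use s0 False in auto)
    moreover have "t2 - s < d" using x False unfolding s_def by simp
    ultimately have a: "Jv - e * t2 \<le> II k s" using d by simp
    have "II k s / t2 \<le> II k s / s" using avgk(2)[of s k] s0 False
      by (intro divide_left_mono) auto
    moreover have "Jv / t2 - e = (Jv - e * t2) / t2" using t2_pos by (simp add: field_simps)
    moreover have "(Jv - e * t2) / t2 \<le> II k s / t2" using a t2_pos by (simp add: divide_right_mono)
    ultimately show ?thesis by simp
  qed
  then show ?thesis using s0 unfolding s_def Jv_def by blast
qed

lemma beta_pos: assumes k: "0 < k"
  shows "beta w \<rho> t1 t2 K1 K2 k =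
   sqrt (1 / t2 * (LINT t:{0..t2}|lborel. (1 - (w - dl t) / w * (mu t / (mu t + dl t))) ^ (2 * k)))"
proof -
  define J where "J = II k t2"
  define f where "f = (\<lambda>x. sqrt (II k (\<rho> x) / \<rho> x))"
  have trm: "sqrt ((LINT t:{0..\<rho> x}|lborel. (opnorm_diff w \<rho> t1 t2 K1 K2 k t)\<^sup>2) / \<rho> x) = f x" for x
    unfolding f_def using int_opn_pos[OF rho_nonneg rho_le_R k, of x] by simp
  have rhs: "sqrt (1 / t2 * (LINT t:{0..t2}|lborel. (1 - (w - dl t) / w * (mu t / (mu t + dl t))) ^ (2 * k)))
      = sqrt (J / t2)" unfolding rhs_pos[OF k] J_def by simp
  have f0: "0 \<le> f x" for x unfolding f_def using avgk(2) rho_nonneg by simp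
  have ub: "f x \<le> sqrt (J / t2)" for x
  proof (cases "\<rho> x = 0")
    case True
    then show ?thesis unfolding f_def J_def using avgk(2) t2_pos by simp
  next
    case False
    then have "0 < \<rho> x" using rho_nonneg[of x] by simp
    then show ?thesis unfolding f_def J_def using avgk(5) by simp
  qed
  have bdd: "bdd_above (range f)" by (rule bdd_aboveI2[where M="sqrt (J / t2)"]) (rule ub)
  define B where "B = (SUP x. f x)"
  have B0: "0 \<le> B" unfolding B_def using f0[of 0] cSUP_upper[OF UNIV_I bdd, of 0] by simp
  have Bub: "B \<le> sqrt (J / t2)" unfolding B_def by (rule cSUP_least) (use ub in auto)
  have fB: "f x \<le> B" for x unfolding B_def by (rule cSUP_upper[OF UNIV_I bdd])
  have Blb: "sqrt (J / t2) \<le> B"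
  proof (cases "J = 0")
    case True
    then show ?thesis using B0 by simp
  next
    case False
    then have Jp: "0 < J" unfolding J_def using avgk(2)[of t2 k] by simp
    have "J / t2 \<le> B\<^sup>2"
    proof (rule ccontr)
      assume "\<not> J / t2 \<le> B\<^sup>2"
      then have ep: "0 < (J / t2 - B\<^sup>2) / 2" by simp
      obtain x where x: "0 < \<rho> x" "J / t2 - (J / t2 - B\<^sup>2) / 2 \<le> II k (\<rho> x) / \<rho> x"
        using approx_sup[OF k Jp[unfolded J_def] ep[unfolded J_def]] unfolding J_def by blast
      have "II k (\<rho> x) / \<rho> x = (f x)\<^sup>2" unfolding f_def using avgk(2) x(1) by simp
      also have "\<dots> \<le> B\<^sup>2" using fB[of x] f0[of x] by (simp add: power_mono)
      finally have "II k (\<rho> x) / \<rho> x \<le> B\<^sup>2" .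
      moreover have "\<And>a b c::real. a \<le> b \<Longrightarrow> c - (c - b) / 2 \<le> a \<Longrightarrow> 0 < (c - b) / 2 \<Longrightarrow> False"
        by (simp add: field_simps)
      ultimately show False using x(2) ep by blast
    qed
    then have "sqrt (J / t2) \<le> sqrt (B\<^sup>2)" by (rule real_sqrt_le_mono)
    then show ?thesis using B0 by simp
  qed
  have "beta w \<rho> t1 t2 K1 K2 k = B" unfolding beta_def trm B_def ..
  then show ?thesis unfolding rhs using Bub Blb by simp
qed

end

theorem lemma4p2:
  fixes w :: real and \<rho> :: "real \<Rightarrow> real" and t1 t2 :: real
    and K1 K2 :: "real \<Rightarrow> real set"
  assumes w_pos: "0 < w"
    and rho_nonneg: "\<And>x. 0 \<le> \<rho> x"
    and rho_meas: "\<rho> \<in> borel_measurable lborel"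
    and rho_int: "integrable lborel \<rho>"
    and rho_int_pos: "0 < (\<integral>x. \<rho> x \<partial>lborel)"
    and rho_bdd: "bdd_above (range \<rho>)"
    and lvl_meas: "\<And>t. 0 < t \<Longrightarrow> t < rho_max \<rho> \<Longrightarrow>
                     0 < emeasure lborel (lvl \<rho> t) \<and> emeasure lborel (lvl \<rho> t) < \<infinity>"
    and Rw: "in_Rw w \<rho> t1 t2 K1 K2"
    and Ki_pos: "\<And>t. t \<in> {t1<..t2} \<Longrightarrow>
                   0 < emeasure lborel (K1 t) \<and> 0 < emeasure lborel (K2 t)"
    and t2_pos: "0 < t2"
  shows "(\<forall>t \<in> {0..rho_max \<rho>}. \<forall>f. L2 (unif (lvl \<rho> t)) f \<longrightarrow>
            0 \<le> (\<integral>x. Hop w \<rho> t1 t2 K1 K2 t f x * f x \<partial>unif (lvl \<rho> t)))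
       \<and> (\<forall>k::nat. beta w \<rho> t1 t2 K1 K2 k =
            sqrt (1 / t2 * (LINT t:{0..t2}|lborel.
              (1 - (w - delta t1 t2 K1 K2 t) / w *
                 (measure lborel (lvl \<rho> t) /
                   (measure lborel (lvl \<rho> t) + delta t1 t2 K1 K2 t))) ^ (2 * k))))"
  proof -
  interpret LS w \<rho> t1 t2 K1 K2
    by (unfold_locales) (use assms in auto)
  show ?thesis
  proof (intro conjI allI ballI impI)
    fix t f assume "L2 (unif (lvl \<rho> t)) f"
    then show "0 \<le> (\<integral>x. Hop w \<rho> t1 t2 K1 K2 t f x * f x \<partial>unif (lvl \<rho> t))" by (rule part1)
  next
    fix k :: nat
    show "beta w \<rho> t1 t2 K1 K2 k =
            sqrt (1 / t2 * (LINT t:{0..t2}|lborel.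
              (1 - (w - delta t1 t2 K1 K2 t) / w *
                 (measure lborel (lvl \<rho> t) /
                   (measure lborel (lvl \<rho> t) + delta t1 t2 K1 K2 t))) ^ (2 * k)))"
    proof (cases "k = 0")
      case True
      then show ?thesis using beta0 by simp
    next
      case False
      then show ?thesis using beta_pos by simp
    qed
  qed
qed

end
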